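(* Let $\Psi$ and $\psi$ be as in the context, let $\chi$ be the unique solution with $\int\chi d\pi=0$ and $\chi\in\bigcap_{\beta\in[1,\alpha)}L^\beta(\pi)$ of $\chi-P\chi=\Psi$, and set $Z_{N,1}=N^{-1/\alpha}(\chi(\xi_1)-P\chi(\xi_0))$, $h_p(x)=e^{ipx}-1-ipx$, $\bar h^{(N)}_p=\mathbb Eh_p(Z_{N,1})$, $\psi^{(N)}(p)=-N\bar h^{(N)}_p$. Then there exists $C>0$ such that $$|\psi^{(N)}(p)-\psi(p)|\le\frac{C}{N^{\alpha_1/\alpha}}|p|(1+|p|)\quad\text{for all }p\in\mathbb R,\ N\ge1.$$ Moreover, for any bounded set $\Delta\subset\mathbb R$ and $\beta\in[1,\alpha)$ there exists $C>0$ such that $$N\int\sup_{\lambda\in\Delta}\Big|h_p\Big(\frac{\Psi(v)+\lambda}{N^{1/\alpha}}\Big)\Big|^\beta\pi(dv)\le C|p|^\beta(1+|p|),\qquad\forall p\in\mathbb R,\ N\ge1.$$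
   Context: $(E,d)$ is a Polish space and $\{\xi_n\}_{n\ge0}$ is a Markov chain on $E$ whose initial law $\pi$ is invariant and ergodic, with transition operator $P$, satisfying $\sup\{\|Pf\|_{L^2(\pi)}:\|f\|_{L^2(\pi)}=1,\int fd\pi=0\}<1$ and $P(w,dv)=p(w,v)\pi(dv)$ with $p\in L^\infty(\pi\otimes\pi)$. $\Psi:E\to\mathbb R$ satisfies $\int\Psi d\pi=0$ and there exist $\alpha\in(1,2)$, $\alpha_1\in(0,2-\alpha)$, $c_*^\pm\ge0$ with $c_*^++c_*^->0$ and $C^*>0$ such that $|\pi(\Psi>\lambda)-c_*^+\lambda^{-\alpha}|+|\pi(\Psi<-\lambda)-c_*^-\lambda^{-\alpha}|\le C^*\lambda^{-\alpha-\alpha_1}$ for $\lambda\ge1$. $\psi(p)=\alpha\int_{\mathbb R}(1+i\lambda p-e^{i\lambda p})c_*(\lambda)|\lambda|^{-1-\alpha}d\lambda$ with $c_*(\lambda)=c_*^-$ for $\lambda<0$ and $c_*^+$ for $\lambda>0$. *)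

theory Defs
  imports "HOL-Probability.Probability"
begin

definition trans_op :: "'a measure \<Rightarrow> ('a \<Rightarrow> 'a \<Rightarrow> real) \<Rightarrow> ('a \<Rightarrow> real) \<Rightarrow> 'a \<Rightarrow> real" where
  "trans_op \<pi> p f w = (\<integral>v. p w v * f v \<partial>\<pi>)"

definition trans_prob :: "'a measure \<Rightarrow> ('a \<Rightarrow> 'a \<Rightarrow> real) \<Rightarrow> 'a \<Rightarrow> 'a set \<Rightarrow> real" where
  "trans_prob \<pi> p w B = (\<integral>v. indicator B v * p w v \<partial>\<pi>)"

definition density_kernel :: "'a measure \<Rightarrow> ('a \<Rightarrow> 'a \<Rightarrow> real) \<Rightarrow> bool" where
  "density_kernel \<pi> p \<longleftrightarrow>
     (\<lambda>(w, v). p w v) \<in> borel_measurable (\<pi> \<Otimes>\<^sub>M \<pi>) \<and>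
     (\<forall>w v. 0 \<le> p w v) \<and>
     (\<forall>w \<in> space \<pi>. integrable \<pi> (p w) \<and> (\<integral>v. p w v \<partial>\<pi>) = 1) \<and>
     (\<exists>B. AE x in \<pi> \<Otimes>\<^sub>M \<pi>. case x of (w, v) \<Rightarrow> p w v \<le> B)"

definition invariant_measure :: "'a measure \<Rightarrow> ('a \<Rightarrow> 'a \<Rightarrow> real) \<Rightarrow> bool" where
  "invariant_measure \<pi> p \<longleftrightarrow>
     (\<forall>B \<in> sets \<pi>. (\<integral>w. trans_prob \<pi> p w B \<partial>\<pi>) = measure \<pi> B)"

definition ergodic_measure :: "'a measure \<Rightarrow> ('a \<Rightarrow> 'a \<Rightarrow> real) \<Rightarrow> bool" where
  "ergodic_measure \<pi> p \<longleftrightarrow>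
     (\<forall>A \<in> sets \<pi>. (AE w in \<pi>. trans_prob \<pi> p w A = indicator A w)
         \<longrightarrow> measure \<pi> A = 0 \<or> measure \<pi> A = 1)"

definition spectral_gap :: "'a measure \<Rightarrow> ('a \<Rightarrow> 'a \<Rightarrow> real) \<Rightarrow> bool" where
  "spectral_gap \<pi> p \<longleftrightarrow>
     (SUP f \<in> {f. f \<in> borel_measurable \<pi> \<and> integrable \<pi> (\<lambda>v. (f v)\<^sup>2)
                  \<and> sqrt (\<integral>v. (f v)\<^sup>2 \<partial>\<pi>) = 1 \<and> (\<integral>v. f v \<partial>\<pi>) = 0}.
        sqrt (\<integral>w. (trans_op \<pi> p f w)\<^sup>2 \<partial>\<pi>)) < 1"

text \<open>xi is a Markov chain on (M) with initial law pi and transition kernel p(w,v) pi(dv):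
  the Markov property is stated on the intersection-stable generator of sigma(xi_0..xi_n).\<close>
definition markov_chain :: "'b measure \<Rightarrow> (nat \<Rightarrow> 'b \<Rightarrow> 'a) \<Rightarrow> 'a measure \<Rightarrow> ('a \<Rightarrow> 'a \<Rightarrow> real) \<Rightarrow> bool" where
  "markov_chain M \<xi> \<pi> p \<longleftrightarrow>
     prob_space M \<and>
     (\<forall>n. \<xi> n \<in> M \<rightarrow>\<^sub>M \<pi>) \<and>
     distr M \<pi> (\<xi> 0) = \<pi> \<and>
     (\<forall>n A B. (\<forall>i. A i \<in> sets \<pi>) \<longrightarrow> B \<in> sets \<pi> \<longrightarrow>
        measure M {\<omega> \<in> space M. (\<forall>i\<le>n. \<xi> i \<omega> \<in> A i) \<and> \<xi> (Suc n) \<omega> \<in> B}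
        = (\<integral>\<omega>. indicator {\<omega> \<in> space M. \<forall>i\<le>n. \<xi> i \<omega> \<in> A i} \<omega> * trans_prob \<pi> p (\<xi> n \<omega>) B \<partial>M))"

definition hfun :: "real \<Rightarrow> real \<Rightarrow> complex" where
  "hfun p x = cis (p * x) - 1 - \<i> * complex_of_real (p * x)"

definition cstar :: "real \<Rightarrow> real \<Rightarrow> real \<Rightarrow> real" where
  "cstar cp cm l = (if l < 0 then cm else cp)"

definition psi_exp :: "real \<Rightarrow> real \<Rightarrow> real \<Rightarrow> real \<Rightarrow> complex" where
  "psi_exp \<alpha> cp cm p = complex_of_real \<alpha> *
     (\<integral>l. (1 + \<i> * complex_of_real (l * p) - cis (l * p)) *
          complex_of_real (cstar cp cm l * \<bar>l\<bar> powr (-1 - \<alpha>)) \<partial>lborel)"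

end

theory Submission
  imports Defs
begin


definition hder :: "real \<Rightarrow> real \<Rightarrow> complex" where
  "hder q t = \<i> * complex_of_real q * (cis (q * t) - 1)"

lemma hfun_0[simp]: "hfun q 0 = 0" by (simp add: hfun_def)
lemma hfun_q0[simp]: "hfun 0 x = 0" by (simp add: hfun_def)
lemma hfun_neg: "hfun q (-x) = hfun (-q) x" by (simp add: hfun_def)
lemma hfun_scale: "hfun q (a*x) = hfun (q*a) x" by (simp add: hfun_def mult.assoc)

lemma hfun_iexp: "hfun q x = exp (\<i> * complex_of_real (q*x)) - 1 - \<i> * complex_of_real (q*x)"
  by (simp add: hfun_def cis_conv_exp)

lemma hd_iexp: "hder q t = \<i> * complex_of_real q * (exp (\<i> * complex_of_real (q*t)) - 1)"
  by (simp add: hder_def cis_conv_exp)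

lemma iexp_m1_le1: "cmod (exp (\<i> * complex_of_real y) - 1) \<le> \<bar>y\<bar>"
  using iexp_approx1[of y 0] by simp
lemma iexp_m1_le2: "cmod (exp (\<i> * complex_of_real y) - 1) \<le> 2"
  using iexp_approx2[of y 0] by simp
lemma iexp_m2_le1: "cmod (exp (\<i> * complex_of_real y) - 1 - \<i> * complex_of_real y) \<le> y^2/2"
  using iexp_approx1[of y 1] by (simp add: diff_diff_eq power2_eq_square)
lemma iexp_m2_le2: "cmod (exp (\<i> * complex_of_real y) - 1 - \<i> * complex_of_real y) \<le> 2 * \<bar>y\<bar>"
  using iexp_approx2[of y 1] by (simp add: diff_diff_eq)

lemma hfun_le1: "cmod (hfun q x) \<le> (q*x)^2/2"
  unfolding hfun_iexp by (rule iexp_m2_le1)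
lemma hfun_le2: "cmod (hfun q x) \<le> 2 * \<bar>q*x\<bar>"
  unfolding hfun_iexp by (rule iexp_m2_le2)

lemma hd_le1: "cmod (hder q t) \<le> \<bar>q\<bar> * \<bar>q*t\<bar>"
proof -
  have "cmod (hder q t) = \<bar>q\<bar> * cmod (exp (\<i> * complex_of_real (q*t)) - 1)"
    by (simp add: hd_iexp norm_mult)
  also have "\<dots> \<le> \<bar>q\<bar> * \<bar>q*t\<bar>" by (intro mult_left_mono iexp_m1_le1) auto
  finally show ?thesis .
qed
lemma hd_le2: "cmod (hder q t) \<le> 2 * \<bar>q\<bar>"
proof -
  have "cmod (hder q t) = \<bar>q\<bar> * cmod (exp (\<i> * complex_of_real (q*t)) - 1)"
    by (simp add: hd_iexp norm_mult)
  also have "\<dots> \<le> \<bar>q\<bar> * 2" by (intro mult_left_mono iexp_m1_le2) auto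
  finally show ?thesis by simp
qed

lemma hfun_diff_le: "cmod (hfun q (x+b) - hfun q x) \<le> (q*b)^2/2 + \<bar>q*b\<bar> * \<bar>q*x\<bar>"
proof -
  define E where "E = (\<lambda>y::real. exp (\<i> * complex_of_real y))"
  have eq: "hfun q (x+b) - hfun q x = E (q*x) * (E (q*b) - 1 - \<i> * complex_of_real (q*b))
            + \<i> * complex_of_real (q*b) * (E (q*x) - 1)"
    unfolding hfun_iexp E_def by (simp add: distrib_left distrib_right exp_add[symmetric] algebra_simps)
  have nE: "cmod (E y) = 1" for y unfolding E_def by simp
  have "cmod (hfun q (x+b) - hfun q x) \<le> cmod (E (q*x) * (E (q*b) - 1 - \<i> * complex_of_real (q*b)))
            + cmod (\<i> * complex_of_real (q*b) * (E (q*x) - 1))"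
    unfolding eq by (rule norm_triangle_ineq)
  also have "\<dots> = cmod (E (q*b) - 1 - \<i> * complex_of_real (q*b)) + \<bar>q*b\<bar> * cmod (E (q*x) - 1)"
    by (simp add: norm_mult nE abs_mult)
  also have "\<dots> \<le> (q*b)^2/2 + \<bar>q*b\<bar> * \<bar>q*x\<bar>"
    unfolding E_def by (intro add_mono mult_left_mono iexp_m2_le1 iexp_m1_le1) auto
  finally show ?thesis .
qed

lemma hfun_deriv: "(hfun q has_vector_derivative hder q t) (at t)"
proof -
  have 1: "((\<lambda>x. q*x) has_vector_derivative q) (at t)"
    using has_vector_derivative_mult_right[OF has_vector_derivative_id[of "at t"], of q] by simp
  have 2: "((\<lambda>y. exp (\<i> * complex_of_real y)) \<circ> (\<lambda>x. q*x) has_vector_derivative q *\<^sub>R (\<i> * exp (\<i> * complex_of_real (q*t)))) (at t)"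
    by (rule vector_diff_chain_at[OF 1 has_vector_derivative_iexp])
  have 3: "((\<lambda>x. \<i> * complex_of_real (q*x)) has_vector_derivative \<i> * complex_of_real q) (at t)"
    by (auto intro!: derivative_eq_intros simp: has_vector_derivative_complex_iff)
  have "((\<lambda>x. exp (\<i> * complex_of_real (q*x)) - 1 - \<i> * complex_of_real (q*x)) has_vector_derivative
          q *\<^sub>R (\<i> * exp (\<i> * complex_of_real (q*t))) - 0 - \<i> * complex_of_real q) (at t)"
    using 2 3 by (intro has_vector_derivative_diff has_vector_derivative_const) (auto simp: o_def)
  moreover have "q *\<^sub>R (\<i> * exp (\<i> * complex_of_real (q*t))) - 0 - \<i> * complex_of_real q = hder q t"
    by (simp add: hd_iexp scaleR_conv_of_real algebra_simps)
  ultimately show ?thesis by (simp add: hfun_iexp[abs_def])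
qed

lemma hd_cont: "continuous_on UNIV (hder q)"
  unfolding hder_def by (intro continuous_intros)

lemma I1:
  fixes c e :: real assumes "0 \<le> c" "-1 < e"
  shows "(\<integral>\<^sup>+t. ennreal (t powr e) * indicator {0..c} t \<partial>lborel) = ennreal (c powr (e+1)/(e+1))"
  by (rule nn_integral_has_integral_lebesgue'[OF _ has_integral_powr_from_0]) (use assms in auto)

lemma I2:
  fixes c e :: real assumes "0 < c" "e < -1"
  shows "(\<integral>\<^sup>+t. ennreal (t powr e) * indicator {c..} t \<partial>lborel) = ennreal (-(c powr (e+1))/(e+1))"
  by (rule nn_integral_has_integral_lebesgue'[OF _ has_integral_powr_to_inf]) (use assms in auto)




lemma I1c:
  fixes c e k :: real assumes "0 \<le> c" "-1 < e" "0 \<le> k"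
  shows "(\<integral>\<^sup>+t. ennreal (k * t powr e) * indicator {0..c} t \<partial>lborel) = ennreal (k * (c powr (e+1)/(e+1)))"
proof -
  have "(\<integral>\<^sup>+t. ennreal (k * t powr e) * indicator {0..c} t \<partial>lborel)
      = (\<integral>\<^sup>+t. ennreal k * (ennreal (t powr e) * indicator {0..c} t) \<partial>lborel)"
    using assms by (intro nn_integral_cong) (simp add: ennreal_mult mult.assoc)
  also have "\<dots> = ennreal k * ennreal (c powr (e+1)/(e+1))"
    using assms by (subst nn_integral_cmult) (auto simp: I1)
  also have "\<dots> = ennreal (k * (c powr (e+1)/(e+1)))"
    using assms by (subst ennreal_mult) auto
  finally show ?thesis .
qed

lemma I2c:
  fixes c e k :: real assumes "0 < c" "e < -1" "0 \<le> k"
  shows "(\<integral>\<^sup>+t. ennreal (k * t powr e) * indicator {c..} t \<partial>lborel) = ennreal (k * (-(c powr (e+1))/(e+1)))"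
proof -
  have "(\<integral>\<^sup>+t. ennreal (k * t powr e) * indicator {c..} t \<partial>lborel)
      = (\<integral>\<^sup>+t. ennreal k * (ennreal (t powr e) * indicator {c..} t) \<partial>lborel)"
    using assms by (intro nn_integral_cong) (simp add: ennreal_mult mult.assoc)
  also have "\<dots> = ennreal k * ennreal (-(c powr (e+1))/(e+1))"
    using assms by (subst nn_integral_cmult) (auto simp: I2)
  also have "\<dots> = ennreal (k * (-(c powr (e+1))/(e+1)))"
  proof -
    have nn: "0 \<le> -(c powr (e+1))/(e+1)" using assms by (intro divide_nonpos_neg) auto
    show ?thesis by (simp only: ennreal_mult[OF assms(3) nn])
  qed
  finally show ?thesis .
qed

lemma FIN:
  fixes \<alpha> q :: real assumes "1 < \<alpha>" "\<alpha> < 2"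
  shows "(\<integral>\<^sup>+t. ennreal (cmod (hder q t) * t powr (-\<alpha>)) * indicator {0<..} t \<partial>lborel) < \<infinity>"
proof -
  have "(\<integral>\<^sup>+t. ennreal (cmod (hder q t) * t powr (-\<alpha>)) * indicator {0<..} t \<partial>lborel)
     \<le> (\<integral>\<^sup>+t. ennreal (q^2 * t powr (1-\<alpha>)) * indicator {0..1} t
              + ennreal (2*\<bar>q\<bar> * t powr (-\<alpha>)) * indicator {1..} t \<partial>lborel)"
  proof (intro nn_integral_mono)
    fix t :: real
    show "ennreal (cmod (hder q t) * t powr (-\<alpha>)) * indicator {0<..} t
       \<le> ennreal (q^2 * t powr (1-\<alpha>)) * indicator {0..1} t + ennreal (2*\<bar>q\<bar> * t powr (-\<alpha>)) * indicator {1..} t"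
    proof (cases "t \<le> 0")
      case True then show ?thesis by simp
    next
      case False
      then have t: "0 < t" by simp
      show ?thesis
      proof (cases "t \<le> 1")
        case True
        have "cmod (hder q t) * t powr (-\<alpha>) \<le> (\<bar>q\<bar> * \<bar>q*t\<bar>) * t powr (-\<alpha>)"
          by (intro mult_right_mono hd_le1) auto
        also have "\<dots> = q^2 * (t * t powr (-\<alpha>))" using t by (simp add: abs_mult power2_eq_square)
        also have "t * t powr (-\<alpha>) = t powr (1-\<alpha>)" using t by (simp add: powr_diff powr_minus divide_inverse)
        finally have "cmod (hder q t) * t powr (-\<alpha>) \<le> q^2 * t powr (1-\<alpha>)" .
        then show ?thesis using t True by (simp add: add_increasing2 ennreal_leI)
      next
        case False
        have "cmod (hder q t) * t powr (-\<alpha>) \<le> 2*\<bar>q\<bar> * t powr (-\<alpha>)"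
          by (intro mult_right_mono hd_le2) auto
        then show ?thesis using t False by (simp add: add_increasing ennreal_leI)
      qed
    qed
  qed
  also have "\<dots> = (\<integral>\<^sup>+t. ennreal (q^2 * t powr (1-\<alpha>)) * indicator {0..1} t \<partial>lborel)
              + (\<integral>\<^sup>+t. ennreal (2*\<bar>q\<bar> * t powr (-\<alpha>)) * indicator {1..} t \<partial>lborel)"
    by (rule nn_integral_add) auto
  also have "\<dots> < \<infinity>"
    using assms by (subst I1c, simp, simp, simp, subst I2c, auto)
  finally show ?thesis .
qed




lemma EST:
  fixes \<alpha> \<alpha>1 c Cs N q :: real and \<Phi> :: "real \<Rightarrow> real"
  assumes a: "1 < \<alpha>" "\<alpha> < 2" "0 < \<alpha>1" "\<alpha>1 < 2 - \<alpha>" "0 \<le> c" "0 \<le> Cs" "1 \<le> N"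
    and \<Phi>0: "\<And>l. 0 \<le> \<Phi> l" and \<Phi>1: "\<And>l. \<Phi> l \<le> 1"
    and tl: "\<And>l. 1 \<le> l \<Longrightarrow> \<bar>\<Phi> l - c * l powr (-\<alpha>)\<bar> \<le> Cs * l powr (-\<alpha>-\<alpha>1)"
  shows "(\<integral>\<^sup>+t. ennreal (cmod (hder q t) * \<bar>N * \<Phi> (t * N powr (1/\<alpha>)) - c * t powr (-\<alpha>)\<bar>) * indicator {0<..} t \<partial>lborel)
     \<le> ennreal ((1/2 + c/(2-\<alpha>) + Cs/(2-\<alpha>-\<alpha>1) + 2*Cs/(\<alpha>+\<alpha>1-1)) * N powr (-\<alpha>1/\<alpha>) * (\<bar>q\<bar> * (1+\<bar>q\<bar>)))"
proof -
  define A where "A = N powr (-1/\<alpha>)"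
  define Nn where "Nn = N powr (-\<alpha>1/\<alpha>)"
  define \<gamma> where "\<gamma> = \<alpha> + \<alpha>1"
  have Npos: "0 < N" using a by simp
  have Apos: "0 < A" unfolding A_def using Npos by simp
  have Ale1: "A \<le> 1"
  proof -
    have "N powr (-1/\<alpha>) \<le> N powr 0" using a by (intro powr_mono) auto
    then show ?thesis using Npos by (simp add: A_def)
  qed
  have Nnpos: "0 \<le> Nn" unfolding Nn_def by simp
  have g: "1 < \<gamma>" "\<gamma> < 2" unfolding \<gamma>_def using a by auto
  have AN: "A * N powr (1/\<alpha>) = 1" unfolding A_def using Npos by (simp add: powr_add[symmetric])
  have key1: "N * (c * (t * N powr (1/\<alpha>)) powr (-\<alpha>)) = c * t powr (-\<alpha>)" if "0 < t" for t
  proof -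
    have "(t * N powr (1/\<alpha>)) powr (-\<alpha>) = t powr (-\<alpha>) * N powr (-1)"
      using that Npos a by (simp add: powr_mult powr_powr)
    moreover have "N * N powr (-1) = 1" using Npos by (simp add: powr_minus)
    ultimately show ?thesis by (simp add: algebra_simps)
  qed
  have key2: "N * (Cs * (t * N powr (1/\<alpha>)) powr (-\<alpha>-\<alpha>1)) = Cs * Nn * t powr (-\<gamma>)" if "0 < t" for t
  proof -
    have "(t * N powr (1/\<alpha>)) powr (-\<alpha>-\<alpha>1) = t powr (-\<gamma>) * N powr ((-\<alpha>-\<alpha>1)/\<alpha>)"
      using that Npos a by (simp add: powr_mult powr_powr \<gamma>_def)
    moreover have "N * N powr ((-\<alpha>-\<alpha>1)/\<alpha>) = Nn"
    proof -
      have "N * N powr ((-\<alpha>-\<alpha>1)/\<alpha>) = N powr (1 + (-\<alpha>-\<alpha>1)/\<alpha>)" using Npos by (simp add: powr_add)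
      also have "1 + (-\<alpha>-\<alpha>1)/\<alpha> = -\<alpha>1/\<alpha>" using a by (simp add: field_simps)
      finally show ?thesis by (simp add: Nn_def)
    qed
    ultimately show ?thesis by (simp add: algebra_simps)
  qed
  let ?f = "\<lambda>t. cmod (hder q t) * \<bar>N * \<Phi> (t * N powr (1/\<alpha>)) - c * t powr (-\<alpha>)\<bar>"
  have pw: "ennreal (?f t) * indicator {0<..} t \<le>
      ennreal (q^2*N * t powr 1) * indicator {0..A} t + ennreal (q^2*c * t powr (1-\<alpha>)) * indicator {0..A} t
    + ennreal (q^2*Cs*Nn * t powr (1-\<gamma>)) * indicator {0..1} t + ennreal (2*\<bar>q\<bar>*Cs*Nn * t powr (-\<gamma>)) * indicator {1..} t" for t
  proof (cases "t \<le> 0")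
    case True then show ?thesis by simp
  next
    case False
    then have t: "0 < t" by simp
    have hd1: "cmod (hder q t) \<le> q^2 * t" using hd_le1[of q t] t by (simp add: abs_mult power2_eq_square)
    show ?thesis
    proof (cases "t < A")
      case True
      have "\<bar>N * \<Phi> (t * N powr (1/\<alpha>)) - c * t powr (-\<alpha>)\<bar> \<le> N * 1 + c * t powr (-\<alpha>)"
        using \<Phi>0 \<Phi>1 a by (intro abs_triangle_ineq4[THEN order_trans] add_mono) (auto simp: abs_mult intro!: mult_left_mono)
      then have "?f t \<le> (q^2 * t) * (N + c * t powr (-\<alpha>))"
        by (intro mult_mono hd1) (use t in auto)
      also have "\<dots> = q^2*N * t powr 1 + q^2*c * t powr (1-\<alpha>)"
        using t by (simp add: algebra_simps powr_diff powr_minus divide_inverse)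
      finally have r: "?f t \<le> q^2*N * t powr 1 + q^2*c * t powr (1-\<alpha>)" .
      have "ennreal (?f t) \<le> ennreal (q^2*N * t powr 1) + ennreal (q^2*c * t powr (1-\<alpha>))"
      proof -
        have "ennreal (?f t) \<le> ennreal (q^2*N * t powr 1 + q^2*c * t powr (1-\<alpha>))" by (rule ennreal_leI[OF r])
        also have "\<dots> = ennreal (q^2*N * t powr 1) + ennreal (q^2*c * t powr (1-\<alpha>))"
          using a by (intro ennreal_plus) auto
        finally show ?thesis .
      qed
      moreover have "ennreal (?f t) * indicator {0<..} t = ennreal (?f t)" using t by simp
      moreover have "ennreal (q^2*N * t powr 1) * indicator {0..A} t = ennreal (q^2*N * t powr 1)" using t True by simp
      moreover have "ennreal (q^2*c * t powr (1-\<alpha>)) * indicator {0..A} t = ennreal (q^2*c * t powr (1-\<alpha>))" using t True by simp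
      ultimately show ?thesis by (metis add_increasing2 zero_le)
    next
      case False
      then have l1: "1 \<le> t * N powr (1/\<alpha>)" using AN mult_right_mono[of A t "N powr (1/\<alpha>)"] by simp
      have "\<bar>N * \<Phi> (t * N powr (1/\<alpha>)) - c * t powr (-\<alpha>)\<bar> = N * \<bar>\<Phi> (t * N powr (1/\<alpha>)) - c * (t * N powr (1/\<alpha>)) powr (-\<alpha>)\<bar>"
      proof -
        have "N * \<Phi> (t * N powr (1/\<alpha>)) - c * t powr (-\<alpha>) = N * (\<Phi> (t * N powr (1/\<alpha>)) - c * (t * N powr (1/\<alpha>)) powr (-\<alpha>))"
          using key1[OF t] by (simp add: right_diff_distrib algebra_simps)
        then show ?thesis using Npos by (simp add: abs_mult)
      qed
      also have "\<dots> \<le> N * (Cs * (t * N powr (1/\<alpha>)) powr (-\<alpha>-\<alpha>1))"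
        using tl[OF l1] Npos by (intro mult_left_mono) auto
      also have "\<dots> = Cs * Nn * t powr (-\<gamma>)" by (rule key2[OF t])
      finally have e: "\<bar>N * \<Phi> (t * N powr (1/\<alpha>)) - c * t powr (-\<alpha>)\<bar> \<le> Cs * Nn * t powr (-\<gamma>)" .
      show ?thesis
      proof (cases "t \<le> 1")
        case True
        have "?f t \<le> (q^2 * t) * (Cs * Nn * t powr (-\<gamma>))"
          using e hd1 t by (intro mult_mono) auto
        also have "\<dots> = q^2*Cs*Nn * t powr (1-\<gamma>)"
          using t by (simp add: algebra_simps powr_diff powr_minus divide_inverse)
        finally have "ennreal (?f t) \<le> ennreal (q^2*Cs*Nn * t powr (1-\<gamma>))" by (rule ennreal_leI)
        moreover have "ennreal (?f t) * indicator {0<..} t = ennreal (?f t)" using t by simp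
        moreover have "ennreal (q^2*Cs*Nn * t powr (1-\<gamma>)) * indicator {0..1} t = ennreal (q^2*Cs*Nn * t powr (1-\<gamma>))" using t True by simp
        ultimately show ?thesis by (metis add_increasing add_increasing2 zero_le)
      next
        case False
        have "?f t \<le> (2*\<bar>q\<bar>) * (Cs * Nn * t powr (-\<gamma>))"
          using e hd_le2[of q t] by (intro mult_mono) auto
        then have "ennreal (?f t) \<le> ennreal (2*\<bar>q\<bar>*Cs*Nn * t powr (-\<gamma>))" by (intro ennreal_leI) (simp add: mult.assoc)
        moreover have "ennreal (?f t) * indicator {0<..} t = ennreal (?f t)" using t by simp
        moreover have "ennreal (2*\<bar>q\<bar>*Cs*Nn * t powr (-\<gamma>)) * indicator {1..} t = ennreal (2*\<bar>q\<bar>*Cs*Nn * t powr (-\<gamma>))" using t False by simp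
        ultimately show ?thesis by (metis add_increasing zero_le)
      qed
    qed
  qed
  have "(\<integral>\<^sup>+t. ennreal (?f t) * indicator {0<..} t \<partial>lborel) \<le>
     (\<integral>\<^sup>+t. ennreal (q^2*N * t powr 1) * indicator {0..A} t + ennreal (q^2*c * t powr (1-\<alpha>)) * indicator {0..A} t
    + ennreal (q^2*Cs*Nn * t powr (1-\<gamma>)) * indicator {0..1} t + ennreal (2*\<bar>q\<bar>*Cs*Nn * t powr (-\<gamma>)) * indicator {1..} t \<partial>lborel)"
    by (intro nn_integral_mono pw)
  also have "\<dots> = (\<integral>\<^sup>+t. ennreal (q^2*N * t powr 1) * indicator {0..A} t \<partial>lborel)
     + (\<integral>\<^sup>+t. ennreal (q^2*c * t powr (1-\<alpha>)) * indicator {0..A} t \<partial>lborel)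
     + (\<integral>\<^sup>+t. ennreal (q^2*Cs*Nn * t powr (1-\<gamma>)) * indicator {0..1} t \<partial>lborel)
     + (\<integral>\<^sup>+t. ennreal (2*\<bar>q\<bar>*Cs*Nn * t powr (-\<gamma>)) * indicator {1..} t \<partial>lborel)"
    by (simp add: nn_integral_add)
  also have "\<dots> = ennreal (q^2*N * (A powr (1+1)/(1+1))) + ennreal (q^2*c * (A powr (1-\<alpha>+1)/(1-\<alpha>+1)))
     + ennreal (q^2*Cs*Nn * (1 powr (1-\<gamma>+1)/(1-\<gamma>+1))) + ennreal (2*\<bar>q\<bar>*Cs*Nn * (-(1 powr (-\<gamma>+1))/(-\<gamma>+1)))"
  proof -
    have i1: "(\<integral>\<^sup>+t. ennreal (q^2*N * t powr 1) * indicator {0..A} t \<partial>lborel) = ennreal (q^2*N * (A powr (1+1)/(1+1)))"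
      by (rule I1c) (use Apos Npos in auto)
    have i2: "(\<integral>\<^sup>+t. ennreal (q^2*c * t powr (1-\<alpha>)) * indicator {0..A} t \<partial>lborel) = ennreal (q^2*c * (A powr (1-\<alpha>+1)/(1-\<alpha>+1)))"
      by (rule I1c) (use Apos a in auto)
    have i3: "(\<integral>\<^sup>+t. ennreal (q^2*Cs*Nn * t powr (1-\<gamma>)) * indicator {0..1} t \<partial>lborel) = ennreal (q^2*Cs*Nn * (1 powr (1-\<gamma>+1)/(1-\<gamma>+1)))"
      by (rule I1c) (use g a Nnpos in auto)
    have i4: "(\<integral>\<^sup>+t. ennreal (2*\<bar>q\<bar>*Cs*Nn * t powr (-\<gamma>)) * indicator {1..} t \<partial>lborel) = ennreal (2*\<bar>q\<bar>*Cs*Nn * (-(1 powr (-\<gamma>+1))/(-\<gamma>+1)))"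
      by (rule I2c) (use g a Nnpos in auto)
    show ?thesis by (simp only: i1 i2 i3 i4)
  qed
  also have "\<dots> = ennreal (q^2*N * (A powr (1+1)/(1+1)) + q^2*c * (A powr (1-\<alpha>+1)/(1-\<alpha>+1))
     + q^2*Cs*Nn * (1 powr (1-\<gamma>+1)/(1-\<gamma>+1)) + 2*\<bar>q\<bar>*Cs*Nn * (-(1 powr (-\<gamma>+1))/(-\<gamma>+1)))"
  proof -
    have n1: "0 \<le> q^2*N * (A powr (1+1)/(1+1))" using Npos by simp
    have n2: "0 \<le> q^2*c * (A powr (1-\<alpha>+1)/(1-\<alpha>+1))" using a by (intro mult_nonneg_nonneg divide_nonneg_pos) auto
    have n3: "0 \<le> q^2*Cs*Nn * (1 powr (1-\<gamma>+1)/(1-\<gamma>+1))" using a g Nnpos by (intro mult_nonneg_nonneg divide_nonneg_pos) auto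
    have n4: "0 \<le> 2*\<bar>q\<bar>*Cs*Nn * (-(1 powr (-\<gamma>+1))/(-\<gamma>+1))" using a g Nnpos by (intro mult_nonneg_nonneg divide_nonpos_neg) auto
    show ?thesis
      by (simp only: ennreal_plus[OF n1 n2, symmetric] ennreal_plus[OF add_nonneg_nonneg[OF n1 n2] n3, symmetric]
          ennreal_plus[OF add_nonneg_nonneg[OF add_nonneg_nonneg[OF n1 n2] n3] n4, symmetric])
  qed
  also have "\<dots> \<le> ennreal ((1/2 + c/(2-\<alpha>) + Cs/(2-\<alpha>-\<alpha>1) + 2*Cs/(\<alpha>+\<alpha>1-1)) * N powr (-\<alpha>1/\<alpha>) * (\<bar>q\<bar> * (1+\<bar>q\<bar>)))"
  proof (rule ennreal_leI)
    have ex: "1 - 2/\<alpha> \<le> -\<alpha>1/\<alpha>"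
    proof -
      have "(\<alpha> - 2)/\<alpha> \<le> (-\<alpha>1)/\<alpha>" using a by (intro divide_right_mono) auto
      moreover have "1 - 2/\<alpha> = (\<alpha>-2)/\<alpha>" using a by (simp add: field_simps)
      ultimately show ?thesis by simp
    qed
    have NA2: "N * A powr 2 \<le> Nn"
    proof -
      have "N * A powr 2 = N * N powr (-1/\<alpha> * 2)" unfolding A_def by (simp only: powr_powr)
      also have "\<dots> = N powr 1 * N powr (-1/\<alpha> * 2)" using Npos by simp
      also have "\<dots> = N powr (1 + -1/\<alpha> * 2)" by (simp only: powr_add)
      also have "1 + -1/\<alpha> * 2 = 1 - 2/\<alpha>" by simp
      finally have "N * A powr 2 = N powr (1 - 2/\<alpha>)" .
      also have "\<dots> \<le> Nn" unfolding Nn_def using a ex by (intro powr_mono) auto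
      finally show ?thesis .
    qed
    have A2a: "A powr (2-\<alpha>) \<le> Nn"
    proof -
      have "A powr (2-\<alpha>) = N powr (-1/\<alpha> * (2-\<alpha>))" unfolding A_def by (simp only: powr_powr)
      also have "-1/\<alpha> * (2-\<alpha>) = 1 - 2/\<alpha>" using a by (simp add: field_simps)
      finally have "A powr (2-\<alpha>) = N powr (1 - 2/\<alpha>)" .
      also have "\<dots> \<le> Nn" unfolding Nn_def using a ex by (intro powr_mono) auto
      finally show ?thesis .
    qed
    have t1: "q^2*N * (A powr (1+1)/(1+1)) \<le> q^2 * Nn * (1/2)"
      using mult_left_mono[OF NA2, of "q^2"] by (simp add: mult.assoc)
    have t2: "q^2*c * (A powr (1-\<alpha>+1)/(1-\<alpha>+1)) \<le> q^2 * Nn * (c/(2-\<alpha>))"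
    proof -
      have e: "1-\<alpha>+1 = 2-\<alpha>" by simp
      have "A powr (2-\<alpha>)/(2-\<alpha>) \<le> Nn/(2-\<alpha>)"
        using A2a a by (intro divide_right_mono) auto
      then have "q^2*c * (A powr (2-\<alpha>)/(2-\<alpha>)) \<le> q^2*c * (Nn/(2-\<alpha>))"
        using a by (intro mult_left_mono) auto
      also have "q^2*c * (Nn/(2-\<alpha>)) = q^2 * Nn * (c/(2-\<alpha>))" by simp
      finally show ?thesis by (simp only: e)
    qed
    have t3: "q^2*Cs*Nn * (1 powr (1-\<gamma>+1)/(1-\<gamma>+1)) = q^2 * Nn * (Cs/(2-\<alpha>-\<alpha>1))"
      by (simp add: \<gamma>_def algebra_simps)
    have t4: "2*\<bar>q\<bar>*Cs*Nn * (-(1 powr (-\<gamma>+1))/(-\<gamma>+1)) = \<bar>q\<bar> * Nn * (2*Cs/(\<alpha>+\<alpha>1-1))"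
      using g by (simp add: \<gamma>_def field_simps)
    define K where "K = 1/2 + c/(2-\<alpha>) + Cs/(2-\<alpha>-\<alpha>1) + 2*Cs/(\<alpha>+\<alpha>1-1)"
    have K1: "1/2 + c/(2-\<alpha>) + Cs/(2-\<alpha>-\<alpha>1) \<le> K" and K2: "2*Cs/(\<alpha>+\<alpha>1-1) \<le> K"
      unfolding K_def using a by auto
    have "q^2*N * (A powr (1+1)/(1+1)) + q^2*c * (A powr (1-\<alpha>+1)/(1-\<alpha>+1))
     + q^2*Cs*Nn * (1 powr (1-\<gamma>+1)/(1-\<gamma>+1)) + 2*\<bar>q\<bar>*Cs*Nn * (-(1 powr (-\<gamma>+1))/(-\<gamma>+1))
      \<le> q^2 * Nn * (1/2 + c/(2-\<alpha>) + Cs/(2-\<alpha>-\<alpha>1)) + \<bar>q\<bar> * Nn * (2*Cs/(\<alpha>+\<alpha>1-1))"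
    proof -
      have d: "q^2 * Nn * (1/2 + c/(2-\<alpha>) + Cs/(2-\<alpha>-\<alpha>1)) = q^2 * Nn * (1/2) + q^2 * Nn * (c/(2-\<alpha>)) + q^2 * Nn * (Cs/(2-\<alpha>-\<alpha>1))"
        by (simp add: distrib_left)
      show ?thesis unfolding d using t1 t2 t3 t4 by linarith
    qed
    also have "\<dots> \<le> q^2 * Nn * K + \<bar>q\<bar> * Nn * K"
      using K1 K2 Nnpos by (intro add_mono mult_left_mono) auto
    also have "\<dots> = K * Nn * (\<bar>q\<bar> * (1+\<bar>q\<bar>))"
      by (simp add: algebra_simps power2_eq_square)
    finally show "q^2*N * (A powr (1+1)/(1+1)) + q^2*c * (A powr (1-\<alpha>+1)/(1-\<alpha>+1))
     + q^2*Cs*Nn * (1 powr (1-\<gamma>+1)/(1-\<gamma>+1)) + 2*\<bar>q\<bar>*Cs*Nn * (-(1 powr (-\<gamma>+1))/(-\<gamma>+1))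
      \<le> (1/2 + c/(2-\<alpha>) + Cs/(2-\<alpha>-\<alpha>1) + 2*Cs/(\<alpha>+\<alpha>1-1)) * N powr (-\<alpha>1/\<alpha>) * (\<bar>q\<bar> * (1+\<bar>q\<bar>))"
      by (simp add: K_def Nn_def)
  qed
  finally show ?thesis .
qed




lemma layer_cake:
  fixes M :: "'b measure" and X :: "'b \<Rightarrow> real" and g G :: "real \<Rightarrow> complex"
  assumes sf: "sigma_finite_measure M"
    and X[measurable]: "X \<in> borel_measurable M"
    and gc: "continuous_on UNIV g"
    and G: "\<And>t. (G has_vector_derivative g t) (at t)"
    and G0: "G 0 = 0"
    and fin: "\<And>t. 0 < t \<Longrightarrow> emeasure M {x\<in>space M. t < X x} < \<infinity>"
    and bnd: "(\<integral>\<^sup>+t. indicator {0<..} t * ennreal (cmod (g t)) * emeasure M {x\<in>space M. t < X x} \<partial>lborel) < \<infinity>"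
  shows "integrable M (\<lambda>x. if 0 < X x then G (X x) else 0)"
    and "integrable lborel (\<lambda>t. if 0 < t then g t * measure M {x\<in>space M. t < X x} else 0)"
    and "(\<integral>x. (if 0 < X x then G (X x) else 0) \<partial>M) = (\<integral>t. (if 0 < t then g t * measure M {x\<in>space M. t < X x} else 0) \<partial>lborel)"
proof -
  interpret M: sigma_finite_measure M by fact
  interpret P: pair_sigma_finite M "lborel :: real measure"
    by (simp add: pair_sigma_finite_def sf lborel.sigma_finite_measure_axioms)
  have gm[measurable]: "g \<in> borel_measurable borel"
    using gc by (simp add: borel_measurable_continuous_onI)
  define f where "f = (\<lambda>x t. if 0 < t \<and> t < X x then g t else 0)"
  have fm[measurable]: "case_prod f \<in> borel_measurable (M \<Otimes>\<^sub>M lborel)"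
    unfolding f_def by measurable
  have inner_nn: "(\<integral>\<^sup>+x. ennreal (norm (f x t)) \<partial>M) = indicator {0<..} t * ennreal (cmod (g t)) * emeasure M {x\<in>space M. t < X x}" for t
  proof (cases "0 < t")
    case True
    have "(\<integral>\<^sup>+x. ennreal (norm (f x t)) \<partial>M) = (\<integral>\<^sup>+x. ennreal (cmod (g t)) * indicator {x\<in>space M. t < X x} x \<partial>M)"
      by (intro nn_integral_cong) (auto simp: f_def True indicator_def)
    also have "\<dots> = ennreal (cmod (g t)) * emeasure M {x\<in>space M. t < X x}"
      by (intro nn_integral_cmult_indicator) measurable
    finally show ?thesis using True by simp
  next
    case False
    then show ?thesis by (simp add: f_def)
  qed
  have "(\<integral>\<^sup>+z. ennreal (norm (case_prod f z)) \<partial>(M \<Otimes>\<^sub>M lborel)) = (\<integral>\<^sup>+t. (\<integral>\<^sup>+x. ennreal (norm (f x t)) \<partial>M) \<partial>lborel)"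
    by (subst P.nn_integral_snd[symmetric]) auto
  also have "\<dots> < \<infinity>" using bnd by (simp add: inner_nn)
  finally have int: "integrable (M \<Otimes>\<^sub>M lborel) (case_prod f)"
    by (intro integrableI_bounded) auto
  have in_t: "(\<integral>t. f x t \<partial>lborel) = (if 0 < X x then G (X x) else 0)" for x
  proof (cases "0 < X x")
    case True
    have "(\<integral>t. f x t \<partial>lborel) = (\<integral>t. indicator {0 .. X x} t *\<^sub>R g t \<partial>lborel)"
    proof (rule integral_cong_AE)
      show "AE t in lborel. f x t = indicator {0 .. X x} t *\<^sub>R g t"
        using AE_lborel_singleton[of 0] AE_lborel_singleton[of "X x"]
        by eventually_elim (auto simp: f_def indicator_def)
    qed (unfold f_def, measurable)
    also have "\<dots> = G (X x) - G 0"
    proof (rule integral_FTC_atLeastAtMost)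
      show "0 \<le> X x" using True by simp
      show "\<And>t. 0 \<le> t \<Longrightarrow> t \<le> X x \<Longrightarrow> (G has_vector_derivative g t) (at t within {0..X x})"
        by (rule has_vector_derivative_at_within[OF G])
      show "continuous_on {0..X x} g" by (rule continuous_on_subset[OF gc]) auto
    qed
    finally show ?thesis using True G0 by simp
  next
    case False
    then have "f x = (\<lambda>_. 0)" by (auto simp: f_def fun_eq_iff)
    then show ?thesis using False by simp
  qed
  have in_x: "(\<integral>x. f x t \<partial>M) = (if 0 < t then g t * measure M {x\<in>space M. t < X x} else 0)" for t
  proof (cases "0 < t")
    case True
    have "(\<integral>x. f x t \<partial>M) = (\<integral>x. indicator {x\<in>space M. t < X x} x *\<^sub>R g t \<partial>M)"
      by (rule Bochner_Integration.integral_cong[OF refl]) (auto simp: f_def True indicator_def)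
    also have "\<dots> = measure M {x\<in>space M. t < X x} *\<^sub>R g t"
      using fin[OF True] by (subst integral_scaleR_left) (auto simp: integral_indicator)
    finally show ?thesis using True by (simp add: scaleR_conv_of_real mult.commute)
  next
    case False
    then show ?thesis by (simp add: f_def)
  qed
  show "integrable M (\<lambda>x. if 0 < X x then G (X x) else 0)"
    using P.integrable_fst[OF int] by (simp add: in_t)
  show "integrable lborel (\<lambda>t. if 0 < t then g t * measure M {x\<in>space M. t < X x} else 0)"
    using P.integrable_snd[OF int] by (simp add: in_x)
  show "(\<integral>x. (if 0 < X x then G (X x) else 0) \<partial>M) = (\<integral>t. (if 0 < t then g t * measure M {x\<in>space M. t < X x} else 0) \<partial>lborel)"
    using P.Fubini_integral[OF int] by (simp add: in_t in_x)
qed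




lemma hfun_cont: "continuous_on UNIV (hfun q)"
  by (intro continuous_at_imp_continuous_on ballI has_vector_derivative_continuous[OF hfun_deriv])

lemma hfun_meas[measurable]: "hfun q \<in> borel_measurable borel"
  using hfun_cont by (rule borel_measurable_continuous_onI)

lemma hder_meas[measurable]: "hder q \<in> borel_measurable borel"
  using hd_cont by (rule borel_measurable_continuous_onI)

definition nu :: "real \<Rightarrow> real measure" where
  "nu \<alpha> = density lborel (\<lambda>l. ennreal (if 0 < l then \<alpha> * l powr (-1-\<alpha>) else 0))"

lemma nu_sf: "sigma_finite_measure (nu \<alpha>)"
  unfolding nu_def by (subst sigma_finite_measure.sigma_finite_iff_density_finite[OF sigma_finite_lborel]) auto

lemma space_nu[simp]: "space (nu \<alpha>) = UNIV" by (simp add: nu_def)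
lemma sets_nu[simp]: "sets (nu \<alpha>) = sets borel" by (simp add: nu_def)

lemma nu_tail:
  assumes "1 < \<alpha>" "0 < t"
  shows "emeasure (nu \<alpha>) {x\<in>space (nu \<alpha>). t < x} = ennreal (t powr (-\<alpha>))"
proof -
  have "emeasure (nu \<alpha>) {x\<in>space (nu \<alpha>). t < x} = (\<integral>\<^sup>+l. ennreal (if 0 < l then \<alpha> * l powr (-1-\<alpha>) else 0) * indicator {t<..} l \<partial>lborel)"
    unfolding nu_def by (subst emeasure_density) (auto simp: greaterThan_def)
  also have "\<dots> = (\<integral>\<^sup>+l. ennreal (\<alpha> * l powr (-1-\<alpha>)) * indicator {t..} l \<partial>lborel)"
    using AE_lborel_singleton[of t] by (intro nn_integral_cong_AE) (use assms in \<open>auto elim!: eventually_mono simp: indicator_def\<close>)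
  also have "\<dots> = ennreal (\<alpha> * (-(t powr (-1-\<alpha>+1))/(-1-\<alpha>+1)))"
    using assms by (intro I2c) auto
  also have "\<alpha> * (-(t powr (-1-\<alpha>+1))/(-1-\<alpha>+1)) = t powr (-\<alpha>)"
    using assms by (simp add: field_simps)
  finally show ?thesis .
qed

lemma nu_tail_measure:
  assumes "1 < \<alpha>" "0 < t"
  shows "measure (nu \<alpha>) {x\<in>space (nu \<alpha>). t < x} = t powr (-\<alpha>)"
  using nu_tail[OF assms] by (simp add: measure_def)

lemma nu_tail':
  assumes "1 < \<alpha>" "0 < t"
  shows "emeasure (nu \<alpha>) {x. t < x} = ennreal (t powr (-\<alpha>))"
  using nu_tail[OF assms] by simp

lemma nu_tail_measure':
  assumes "1 < \<alpha>" "0 < t"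
  shows "measure (nu \<alpha>) {x. t < x} = t powr (-\<alpha>)"
  using nu_tail_measure[OF assms] by simp

lemma nu_lc:
  assumes a: "1 < \<alpha>" "\<alpha> < 2"
  shows "integrable lborel (\<lambda>t. if 0 < t then hder q t * t powr (-\<alpha>) else 0)"
    and "integrable lborel (\<lambda>l. (if 0 < l then \<alpha> * l powr (-1-\<alpha>) else 0) *\<^sub>R (if 0 < l then hfun q l else 0))"
    and "(\<integral>l. (if 0 < l then \<alpha> * l powr (-1-\<alpha>) else 0) *\<^sub>R (if 0 < l then hfun q l else 0) \<partial>lborel)
         = (\<integral>t. (if 0 < t then hder q t * t powr (-\<alpha>) else 0) \<partial>lborel)"
proof -
  have fin: "\<And>t. 0 < t \<Longrightarrow> emeasure (nu \<alpha>) {x\<in>space (nu \<alpha>). t < x} < \<infinity>"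
    using nu_tail a by simp
  have bnd: "(\<integral>\<^sup>+t. indicator {0<..} t * ennreal (cmod (hder q t)) * emeasure (nu \<alpha>) {x\<in>space (nu \<alpha>). t < x} \<partial>lborel) < \<infinity>"
  proof -
    have "(\<integral>\<^sup>+t. indicator {0<..} t * ennreal (cmod (hder q t)) * emeasure (nu \<alpha>) {x\<in>space (nu \<alpha>). t < x} \<partial>lborel)
       = (\<integral>\<^sup>+t. ennreal (cmod (hder q t) * t powr (-\<alpha>)) * indicator {0<..} t \<partial>lborel)"
      by (intro nn_integral_cong) (auto simp: nu_tail'[OF a(1)] ennreal_mult indicator_def)
    also have "\<dots> < \<infinity>" by (rule FIN[OF a])
    finally show ?thesis .
  qed
  have idm: "(\<lambda>x::real. x) \<in> borel_measurable (nu \<alpha>)" using measurable_ident_sets[of "nu \<alpha>" borel] by simp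
  note L = layer_cake[where M="nu \<alpha>" and X="\<lambda>x. x" and g="hder q" and G="hfun q", OF nu_sf idm hd_cont hfun_deriv hfun_0 fin bnd]
  have eqf: "(\<lambda>t. if 0 < t then hder q t * measure (nu \<alpha>) {x\<in>space (nu \<alpha>). t < x} else 0) = (\<lambda>t. if 0 < t then hder q t * t powr (-\<alpha>) else 0)"
    using nu_tail_measure[OF a(1)] by (auto simp del: space_nu simp: fun_eq_iff)
  show "integrable lborel (\<lambda>t. if 0 < t then hder q t * t powr (-\<alpha>) else 0)"
    using L(2) unfolding eqf .
  have dm: "(\<lambda>l. if 0 < l then \<alpha> * l powr (-1-\<alpha>) else 0) \<in> borel_measurable lborel" by measurable
  have dnn: "AE l in lborel. 0 \<le> (if 0 < l then \<alpha> * l powr (-1-\<alpha>) else 0)" using a by auto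
  have "integrable (nu \<alpha>) (\<lambda>x. if 0 < x then hfun q x else 0)" using L(1) .
  then show "integrable lborel (\<lambda>l. (if 0 < l then \<alpha> * l powr (-1-\<alpha>) else 0) *\<^sub>R (if 0 < l then hfun q l else 0))"
    unfolding nu_def by (subst (asm) integrable_density[OF _ dm dnn]) (auto simp: hfun_def)
  have "(\<integral>l. (if 0 < l then \<alpha> * l powr (-1-\<alpha>) else 0) *\<^sub>R (if 0 < l then hfun q l else 0) \<partial>lborel)
      = (\<integral>x. (if 0 < x then hfun q x else 0) \<partial>nu \<alpha>)"
    unfolding nu_def by (subst integral_density[OF _ dm dnn]) (auto simp: hfun_def)
  also have "\<dots> = (\<integral>t. (if 0 < t then hder q t * t powr (-\<alpha>) else 0) \<partial>lborel)"
    using L(3) unfolding eqf .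
  finally show "(\<integral>l. (if 0 < l then \<alpha> * l powr (-1-\<alpha>) else 0) *\<^sub>R (if 0 < l then hfun q l else 0) \<partial>lborel)
         = (\<integral>t. (if 0 < t then hder q t * t powr (-\<alpha>) else 0) \<partial>lborel)" .
qed

lemma PSI:
  assumes a: "1 < \<alpha>" "\<alpha> < 2"
  shows "psi_exp \<alpha> cp cm q = -(complex_of_real cp * (\<integral>t. (if 0 < t then hder q t * t powr (-\<alpha>) else 0) \<partial>lborel)
             + complex_of_real cm * (\<integral>t. (if 0 < t then hder (-q) t * t powr (-\<alpha>) else 0) \<partial>lborel))"
proof -
  define Pq where "Pq = (\<lambda>q' l. (if 0 < l then \<alpha> * l powr (-1-\<alpha>) else 0) *\<^sub>R (if 0 < l then hfun q' l else 0))"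
  have an: "\<alpha> \<noteq> 0" using a by simp
  have F_eq: "(1 + \<i> * complex_of_real (l * q) - cis (l * q)) * complex_of_real (cstar cp cm l * \<bar>l\<bar> powr (-1 - \<alpha>))
     = - (complex_of_real (cp/\<alpha>) * Pq q l) - complex_of_real (cm/\<alpha>) * Pq (-q) (-l)" for l
  proof (cases "0 < l")
    case True
    then show ?thesis using an
      by (simp add: Pq_def cstar_def hfun_def scaleR_conv_of_real algebra_simps)
  next
    case False
    show ?thesis
    proof (cases "l = 0")
      case True then show ?thesis by (simp add: Pq_def)
    next
      case False
      with \<open>\<not> 0 < l\<close> have l: "l < 0" by simp
      have "hfun (-q) (-l) = hfun q l" using hfun_neg[of "-q" l] by simp
      then show ?thesis using an l
        by (simp add: Pq_def cstar_def hfun_def scaleR_conv_of_real algebra_simps)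
    qed
  qed
  have i1: "integrable lborel (Pq q)" unfolding Pq_def using nu_lc(2)[OF a] .
  have i2: "integrable lborel (\<lambda>l. Pq (-q) (-l))"
  proof -
    have "integrable lborel (Pq (-q))" unfolding Pq_def using nu_lc(2)[OF a] .
    then have "integrable lborel (\<lambda>x. Pq (-q) (0 + -1*x))" by (rule lborel_integrable_real_affine) simp
    then show ?thesis by simp
  qed
  have r: "(\<integral>l. Pq (-q) (-l) \<partial>lborel) = (\<integral>l. Pq (-q) l \<partial>lborel)"
    using lborel_integral_real_affine[of "-1" "Pq (-q)" 0] by simp
  have "psi_exp \<alpha> cp cm q = complex_of_real \<alpha> * (\<integral>l. - (complex_of_real (cp/\<alpha>) * Pq q l) - complex_of_real (cm/\<alpha>) * Pq (-q) (-l) \<partial>lborel)"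
    unfolding psi_exp_def F_eq ..
  also have "\<dots> = complex_of_real \<alpha> * (- (complex_of_real (cp/\<alpha>) * (\<integral>l. Pq q l \<partial>lborel)) - complex_of_real (cm/\<alpha>) * (\<integral>l. Pq (-q) (-l) \<partial>lborel))"
    using i1 i2 by (simp add: integral_diff integral_minus)
  also have "\<dots> = -(complex_of_real cp * (\<integral>l. Pq q l \<partial>lborel) + complex_of_real cm * (\<integral>l. Pq (-q) l \<partial>lborel))"
    unfolding r using an by (simp add: algebra_simps of_real_divide)
  also have "\<dots> = -(complex_of_real cp * (\<integral>t. (if 0 < t then hder q t * t powr (-\<alpha>) else 0) \<partial>lborel)
             + complex_of_real cm * (\<integral>t. (if 0 < t then hder (-q) t * t powr (-\<alpha>) else 0) \<partial>lborel))"
    unfolding Pq_def nu_lc(3)[OF a] ..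
  finally show ?thesis .
qed




lemma TAILB:
  fixes \<pi> :: "'a measure" and \<Psi> :: "'a \<Rightarrow> real"
  assumes pi_prob: "prob_space \<pi>" and Psi_meas[measurable]: "\<Psi> \<in> borel_measurable \<pi>"
    and a: "1 < \<alpha>" "0 < \<alpha>1" "0 \<le> cp" "0 \<le> cm" "0 < Cs"
    and tails: "\<And>l. l \<ge> 1 \<Longrightarrow>
        \<bar>measure \<pi> {v \<in> space \<pi>. \<Psi> v > l} - cp * l powr (-\<alpha>)\<bar>
        + \<bar>measure \<pi> {v \<in> space \<pi>. \<Psi> v < - l} - cm * l powr (-\<alpha>)\<bar>
        \<le> Cs * l powr (-\<alpha> - \<alpha>1)"
    and t: "0 < t"
  shows "measure \<pi> {v\<in>space \<pi>. t < \<bar>\<Psi> v\<bar>} \<le> (1 + cp + cm + Cs) * t powr (-\<alpha>)"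
proof -
  interpret prob_space \<pi> by fact
  show ?thesis
  proof (cases "t < 1")
    case True
    have "1 \<le> t powr (-\<alpha>)"
    proof -
      have "t powr \<alpha> \<le> 1 powr \<alpha>" using True t a by (intro powr_mono2) auto
      then have "t powr \<alpha> \<le> 1" by simp
      then show ?thesis using t by (simp add: powr_minus field_simps)
    qed
    moreover have "measure \<pi> {v\<in>space \<pi>. t < \<bar>\<Psi> v\<bar>} \<le> 1" by simp
    ultimately show ?thesis using a
      by (smt (verit, ccfv_SIG) mult_le_cancel_right1 powr_ge_zero)
  next
    case False
    then have l: "1 \<le> t" by simp
    have "{v\<in>space \<pi>. t < \<bar>\<Psi> v\<bar>} = {v \<in> space \<pi>. \<Psi> v > t} \<union> {v \<in> space \<pi>. \<Psi> v < - t}" by auto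
    then have "measure \<pi> {v\<in>space \<pi>. t < \<bar>\<Psi> v\<bar>} \<le> measure \<pi> {v \<in> space \<pi>. \<Psi> v > t} + measure \<pi> {v \<in> space \<pi>. \<Psi> v < - t}"
      by (simp add: measure_Un_le)
    also have "\<dots> \<le> cp * t powr (-\<alpha>) + cm * t powr (-\<alpha>) + Cs * t powr (-\<alpha> - \<alpha>1)"
      using tails[OF l] by linarith
    also have "Cs * t powr (-\<alpha> - \<alpha>1) \<le> Cs * t powr (-\<alpha>)"
      using l a by (intro mult_left_mono powr_mono) auto
    also have "cp * t powr (-\<alpha>) + cm * t powr (-\<alpha>) + Cs * t powr (-\<alpha>) \<le> (1 + cp + cm + Cs) * t powr (-\<alpha>)"
      by (simp add: algebra_simps)
    finally show ?thesis by simp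
  qed
qed

definition phi :: "real \<Rightarrow> real \<Rightarrow> real" where
  "phi \<beta> w = min (w powr \<beta>) (w powr (2*\<beta>))"

lemma phi_nonneg: "0 \<le> phi \<beta> w" by (simp add: phi_def)

lemma phi_mono: "0 \<le> \<beta> \<Longrightarrow> 0 \<le> y \<Longrightarrow> y \<le> z \<Longrightarrow> phi \<beta> y \<le> phi \<beta> z"
  unfolding phi_def by (intro min.mono powr_mono2) auto

lemma phi_double: "0 \<le> \<beta> \<Longrightarrow> 0 \<le> w \<Longrightarrow> phi \<beta> (2*w) \<le> 4 powr \<beta> * phi \<beta> w"
proof -
  assume b: "0 \<le> \<beta>" and w: "0 \<le> w"
  have 1: "(2*w) powr \<beta> \<le> 4 powr \<beta> * w powr \<beta>"
    using b w by (simp add: powr_mult) (intro mult_right_mono powr_mono2, auto)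
  have 2: "(2*w) powr (2*\<beta>) = 4 powr \<beta> * w powr (2*\<beta>)"
    using w by (simp add: powr_mult powr_powr[symmetric])
  have "min ((2*w) powr \<beta>) ((2*w) powr (2*\<beta>)) \<le> min (4 powr \<beta> * w powr \<beta>) (4 powr \<beta> * w powr (2*\<beta>))"
    using 1 2 by (intro min.mono) auto
  also have "\<dots> = 4 powr \<beta> * min (w powr \<beta>) (w powr (2*\<beta>))" by (simp add: min_mult_distrib_left)
  finally show ?thesis by (simp add: phi_def)
qed

lemma phi_sum: "0 \<le> \<beta> \<Longrightarrow> 0 \<le> y \<Longrightarrow> 0 \<le> z \<Longrightarrow> phi \<beta> (y+z) \<le> 4 powr \<beta> * (phi \<beta> y + phi \<beta> z)"
proof -
  assume b: "0 \<le> \<beta>" and y: "0 \<le> y" and z: "0 \<le> z"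
  have "phi \<beta> (y+z) \<le> phi \<beta> (2 * max y z)" using b y z by (intro phi_mono) auto
  also have "\<dots> \<le> 4 powr \<beta> * phi \<beta> (max y z)" using b y z by (intro phi_double) auto
  also have "phi \<beta> (max y z) \<le> phi \<beta> y + phi \<beta> z"
    using phi_nonneg[of \<beta> y] phi_nonneg[of \<beta> z] by (cases "y \<le> z") (auto simp: max_def)
  finally show ?thesis by (simp add: mult_left_mono)
qed

lemma phi_le_alpha: "1 \<le> \<beta> \<Longrightarrow> \<beta> \<le> \<alpha> \<Longrightarrow> \<alpha> \<le> 2*\<beta> \<Longrightarrow> 0 \<le> w \<Longrightarrow> phi \<beta> w \<le> w powr \<alpha>"
proof -
  assume b: "1 \<le> \<beta>" "\<beta> \<le> \<alpha>" "\<alpha> \<le> 2*\<beta>" and w: "0 \<le> w"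
  show ?thesis
  proof (cases "w \<le> 1")
    case True
    have "w powr (2*\<beta>) \<le> w powr \<alpha>"
      using True w b by (cases "w = 0") (auto intro: powr_mono')
    then show ?thesis by (simp add: phi_def)
  next
    case False
    have "w powr \<beta> \<le> w powr \<alpha>" using False b by (intro powr_mono) auto
    then show ?thesis by (simp add: phi_def)
  qed
qed

lemma hfun_phi: "0 \<le> \<beta> \<Longrightarrow> cmod (hfun q x) powr \<beta> \<le> 2 powr \<beta> * phi \<beta> \<bar>q*x\<bar>"
proof -
  assume b: "0 \<le> \<beta>"
  have 1: "cmod (hfun q x) powr \<beta> \<le> (2 * \<bar>q*x\<bar>) powr \<beta>"
    using b by (intro powr_mono2 hfun_le2) auto
  have "cmod (hfun q x) \<le> 2 * \<bar>q*x\<bar> powr 2"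
  proof -
    have "cmod (hfun q x) \<le> (q*x)^2/2" by (rule hfun_le1)
    also have "\<dots> \<le> 2 * (q*x)^2" by simp
    also have "(q*x)^2 = \<bar>q*x\<bar> powr 2" by (simp add: powr_numeral)
    finally show ?thesis .
  qed
  then have 2: "cmod (hfun q x) powr \<beta> \<le> (2 * \<bar>q*x\<bar> powr 2) powr \<beta>"
    using b by (intro powr_mono2) auto
  have e2: "(2 * \<bar>q*x\<bar> powr 2) powr \<beta> = 2 powr \<beta> * \<bar>q*x\<bar> powr (2*\<beta>)"
  proof -
    have "(2 * \<bar>q*x\<bar> powr 2) powr \<beta> = 2 powr \<beta> * (\<bar>q*x\<bar> powr 2) powr \<beta>" by (rule powr_mult)
    also have "(\<bar>q*x\<bar> powr 2) powr \<beta> = \<bar>q*x\<bar> powr (2*\<beta>)" by (rule powr_powr)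
    finally show ?thesis .
  qed
  have e1: "(2 * \<bar>q*x\<bar>) powr \<beta> = 2 powr \<beta> * \<bar>q*x\<bar> powr \<beta>"
    by (simp add: powr_mult)
  have "cmod (hfun q x) powr \<beta> \<le> min (2 powr \<beta> * \<bar>q*x\<bar> powr \<beta>) (2 powr \<beta> * \<bar>q*x\<bar> powr (2*\<beta>))"
    using 1 2 e1 e2 by simp
  then show ?thesis by (simp add: phi_def min_mult_distrib_left)
qed




lemma PHI_INT:
  fixes \<pi> :: "'a measure" and \<Psi> :: "'a \<Rightarrow> real"
  assumes pi_prob: "prob_space \<pi>" and Psi_meas[measurable]: "\<Psi> \<in> borel_measurable \<pi>"
    and b: "1 \<le> \<beta>" "\<beta> < \<alpha>" "\<alpha> < 2" and K: "0 \<le> K"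
    and TB: "\<And>t. 0 < t \<Longrightarrow> measure \<pi> {v\<in>space \<pi>. t < \<bar>\<Psi> v\<bar>} \<le> K * t powr (-\<alpha>)"
    and s: "0 < s"
  shows "(\<integral>\<^sup>+v. ennreal (phi \<beta> (s * \<bar>\<Psi> v\<bar>)) \<partial>\<pi>) \<le> ennreal (4 powr \<beta> * (K * s powr \<alpha> * (1/(2*\<beta>-\<alpha>) + 1/(\<alpha>-\<beta>))))"
proof -
  interpret prob_space \<pi> by fact
  interpret PS: pair_sigma_finite \<pi> "lborel :: real measure"
    by (simp add: pair_sigma_finite_def lborel.sigma_finite_measure_axioms prob_space_imp_sigma_finite pi_prob)
  define g where "g = (\<lambda>t. s * min ((s*t) powr (2*\<beta>-1)) ((s*t) powr (\<beta>-1)))"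
  have g_nn: "0 \<le> g t" for t unfolding g_def using s by simp
  have g_mono: "g t \<le> g u" if "0 \<le> t" "t \<le> u" for t u
    unfolding g_def using s b that
    by (intro mult_left_mono min.mono powr_mono2) (auto intro: mult_left_mono)
  have gm[measurable]: "g \<in> borel_measurable borel" unfolding g_def by measurable
  have lower: "ennreal (phi \<beta> (s*y)) \<le> ennreal (4 powr \<beta>) * (\<integral>\<^sup>+t. (if 0 < t \<and> t < y then ennreal (g t) else 0) \<partial>lborel)"
    if y: "0 \<le> y" for y
  proof (cases "y = 0")
    case True
    then show ?thesis using b by (simp add: phi_def)
  next
    case False
    with y have y: "0 < y" by simp
    define w where "w = s * (y/2)"
    have w: "0 < w" unfolding w_def using s y by simp
    have "phi \<beta> (s*y) = phi \<beta> (2*w)" unfolding w_def by simp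
    also have "\<dots> \<le> 4 powr \<beta> * phi \<beta> w" using b w by (intro phi_double) auto
    also have "phi \<beta> w = g (y/2) * (y/2)"
    proof -
      have "g (y/2) * (y/2) = w * min (w powr (2*\<beta>-1)) (w powr (\<beta>-1))"
        unfolding g_def w_def by (simp add: algebra_simps)
      also have "\<dots> = min (w * w powr (2*\<beta>-1)) (w * w powr (\<beta>-1))"
        using w by (simp add: min_mult_distrib_left)
      also have "w * w powr (2*\<beta>-1) = w powr (2*\<beta>)" using w by (simp add: powr_diff)
      also have "w * w powr (\<beta>-1) = w powr \<beta>" using w by (simp add: powr_diff)
      finally show ?thesis by (simp add: phi_def min.commute)
    qed
    finally have r: "phi \<beta> (s*y) \<le> 4 powr \<beta> * (g (y/2) * (y/2))" .
    have "ennreal (g (y/2) * (y/2)) = (\<integral>\<^sup>+t. ennreal (g (y/2)) * indicator {y/2<..<y} t \<partial>lborel)"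
    proof -
      have "ennreal (g (y/2) * (y/2)) = ennreal (g (y/2)) * ennreal (y/2)"
        using y g_nn by (intro ennreal_mult) auto
      then show ?thesis using y by (simp add: nn_integral_cmult_indicator)
    qed
    also have "\<dots> \<le> (\<integral>\<^sup>+t. (if 0 < t \<and> t < y then ennreal (g t) else 0) \<partial>lborel)"
      using y by (intro nn_integral_mono) (auto simp: indicator_def intro!: ennreal_leI g_mono)
    finally have "ennreal (4 powr \<beta>) * ennreal (g (y/2) * (y/2)) \<le> ennreal (4 powr \<beta>) * (\<integral>\<^sup>+t. (if 0 < t \<and> t < y then ennreal (g t) else 0) \<partial>lborel)"
      by (rule mult_left_mono) simp
    moreover have "ennreal (phi \<beta> (s*y)) \<le> ennreal (4 powr \<beta>) * ennreal (g (y/2) * (y/2))"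
      using r g_nn y by (subst ennreal_mult[symmetric]) (auto intro!: ennreal_leI)
    ultimately show ?thesis by (rule order_trans[rotated])
  qed
  have "(\<integral>\<^sup>+v. ennreal (phi \<beta> (s * \<bar>\<Psi> v\<bar>)) \<partial>\<pi>) \<le>
        (\<integral>\<^sup>+v. ennreal (4 powr \<beta>) * (\<integral>\<^sup>+t. (if 0 < t \<and> t < \<bar>\<Psi> v\<bar> then ennreal (g t) else 0) \<partial>lborel) \<partial>\<pi>)"
    by (intro nn_integral_mono lower) simp
  also have "\<dots> = ennreal (4 powr \<beta>) * (\<integral>\<^sup>+v. (\<integral>\<^sup>+t. (if 0 < t \<and> t < \<bar>\<Psi> v\<bar> then ennreal (g t) else 0) \<partial>lborel) \<partial>\<pi>)"
    by (rule nn_integral_cmult) measurable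
  also have "(\<integral>\<^sup>+v. (\<integral>\<^sup>+t. (if 0 < t \<and> t < \<bar>\<Psi> v\<bar> then ennreal (g t) else 0) \<partial>lborel) \<partial>\<pi>)
      = (\<integral>\<^sup>+t. (\<integral>\<^sup>+v. (if 0 < t \<and> t < \<bar>\<Psi> v\<bar> then ennreal (g t) else 0) \<partial>\<pi>) \<partial>lborel)"
    by (rule PS.Fubini'[symmetric]) measurable
  also have "\<dots> \<le> (\<integral>\<^sup>+t. ennreal (K * s powr (2*\<beta>) * t powr (2*\<beta>-1-\<alpha>)) * indicator {0..1/s} t
        + ennreal (K * s powr \<beta> * t powr (\<beta>-1-\<alpha>)) * indicator {1/s..} t \<partial>lborel)"
  proof (intro nn_integral_mono)
    fix t :: real
    show "(\<integral>\<^sup>+v. (if 0 < t \<and> t < \<bar>\<Psi> v\<bar> then ennreal (g t) else 0) \<partial>\<pi>)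
        \<le> ennreal (K * s powr (2*\<beta>) * t powr (2*\<beta>-1-\<alpha>)) * indicator {0..1/s} t
        + ennreal (K * s powr \<beta> * t powr (\<beta>-1-\<alpha>)) * indicator {1/s..} t"
    proof (cases "0 < t")
      case False then show ?thesis by simp
    next
      case True
      have "(\<integral>\<^sup>+v. (if 0 < t \<and> t < \<bar>\<Psi> v\<bar> then ennreal (g t) else 0) \<partial>\<pi>)
          = (\<integral>\<^sup>+v. ennreal (g t) * indicator {v\<in>space \<pi>. t < \<bar>\<Psi> v\<bar>} v \<partial>\<pi>)"
        using True by (intro nn_integral_cong) (auto simp: indicator_def)
      also have "\<dots> = ennreal (g t) * emeasure \<pi> {v\<in>space \<pi>. t < \<bar>\<Psi> v\<bar>}"
        by (rule nn_integral_cmult_indicator) measurable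
      also have "\<dots> = ennreal (g t * measure \<pi> {v\<in>space \<pi>. t < \<bar>\<Psi> v\<bar>})"
        using g_nn by (simp add: emeasure_eq_measure ennreal_mult)
      also have "\<dots> \<le> ennreal (g t * (K * t powr (-\<alpha>)))"
        using TB[OF True] g_nn by (intro ennreal_leI mult_left_mono) auto
      also have "\<dots> \<le> ennreal (K * s powr (2*\<beta>) * t powr (2*\<beta>-1-\<alpha>)) * indicator {0..1/s} t
        + ennreal (K * s powr \<beta> * t powr (\<beta>-1-\<alpha>)) * indicator {1/s..} t"
      proof (cases "t \<le> 1/s")
        case True2: True
        have st: "s*t \<le> 1" using True2 s by (simp add: field_simps)
        have "g t \<le> s * (s*t) powr (2*\<beta>-1)" unfolding g_def using s by (intro mult_left_mono) auto
        also have "\<dots> = s powr (2*\<beta>) * t powr (2*\<beta>-1)"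
          using s True by (simp add: powr_mult powr_diff)
        finally have "g t * (K * t powr (-\<alpha>)) \<le> (s powr (2*\<beta>) * t powr (2*\<beta>-1)) * (K * t powr (-\<alpha>))"
          using K by (intro mult_right_mono) auto
        also have "\<dots> = K * s powr (2*\<beta>) * t powr (2*\<beta>-1-\<alpha>)"
          using True by (simp add: powr_diff powr_minus divide_inverse)
        finally have "ennreal (g t * (K * t powr (-\<alpha>))) \<le> ennreal (K * s powr (2*\<beta>) * t powr (2*\<beta>-1-\<alpha>))"
          by (rule ennreal_leI)
        then show ?thesis using True True2 by (simp add: add_increasing2)
      next
        case False2: False
        have st: "1 \<le> s*t" using False2 s by (simp add: field_simps)
        have "g t \<le> s * (s*t) powr (\<beta>-1)" unfolding g_def using s by (intro mult_left_mono) auto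
        also have "\<dots> = s powr \<beta> * t powr (\<beta>-1)"
          using s True by (simp add: powr_mult powr_diff)
        finally have "g t * (K * t powr (-\<alpha>)) \<le> (s powr \<beta> * t powr (\<beta>-1)) * (K * t powr (-\<alpha>))"
          using K by (intro mult_right_mono) auto
        also have "\<dots> = K * s powr \<beta> * t powr (\<beta>-1-\<alpha>)"
          using True by (simp add: powr_diff powr_minus divide_inverse)
        finally have "ennreal (g t * (K * t powr (-\<alpha>))) \<le> ennreal (K * s powr \<beta> * t powr (\<beta>-1-\<alpha>))"
          by (rule ennreal_leI)
        then show ?thesis using True False2 by (simp add: add_increasing)
      qed
      finally show ?thesis .
    qed
  qed
  also have "\<dots> = (\<integral>\<^sup>+t. ennreal (K * s powr (2*\<beta>) * t powr (2*\<beta>-1-\<alpha>)) * indicator {0..1/s} t \<partial>lborel)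
        + (\<integral>\<^sup>+t. ennreal (K * s powr \<beta> * t powr (\<beta>-1-\<alpha>)) * indicator {1/s..} t \<partial>lborel)"
    by (rule nn_integral_add) auto
  also have "\<dots> = ennreal (K * s powr (2*\<beta>) * ((1/s) powr (2*\<beta>-1-\<alpha>+1)/(2*\<beta>-1-\<alpha>+1)))
        + ennreal (K * s powr \<beta> * (-((1/s) powr (\<beta>-1-\<alpha>+1))/(\<beta>-1-\<alpha>+1)))"
  proof -
    have i1: "(\<integral>\<^sup>+t. ennreal (K * s powr (2*\<beta>) * t powr (2*\<beta>-1-\<alpha>)) * indicator {0..1/s} t \<partial>lborel)
       = ennreal (K * s powr (2*\<beta>) * ((1/s) powr (2*\<beta>-1-\<alpha>+1)/(2*\<beta>-1-\<alpha>+1)))"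
      by (rule I1c) (use s b K in auto)
    have i2: "(\<integral>\<^sup>+t. ennreal (K * s powr \<beta> * t powr (\<beta>-1-\<alpha>)) * indicator {1/s..} t \<partial>lborel)
       = ennreal (K * s powr \<beta> * (-((1/s) powr (\<beta>-1-\<alpha>+1))/(\<beta>-1-\<alpha>+1)))"
      by (rule I2c) (use s b K in auto)
    show ?thesis by (simp only: i1 i2)
  qed
  also have "\<dots> = ennreal (K * s powr \<alpha> * (1/(2*\<beta>-\<alpha>))) + ennreal (K * s powr \<alpha> * (1/(\<alpha>-\<beta>)))"
  proof -
    have e1: "s powr (2*\<beta>) * ((1/s) powr (2*\<beta>-1-\<alpha>+1)/(2*\<beta>-1-\<alpha>+1)) = s powr \<alpha> * (1/(2*\<beta>-\<alpha>))"
    proof -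
      have h: "s powr (2*\<beta>) / s powr (2*\<beta>-\<alpha>) = s powr \<alpha>" using powr_diff[of s "2*\<beta>" "2*\<beta>-\<alpha>"] by simp
      have "s powr (2*\<beta>) * ((1/s) powr (2*\<beta>-1-\<alpha>+1)/(2*\<beta>-1-\<alpha>+1)) = (s powr (2*\<beta>) / s powr (2*\<beta>-\<alpha>)) / (2*\<beta>-\<alpha>)"
        using s by (simp add: powr_divide)
      then show ?thesis using h by simp
    qed
    have e2: "s powr \<beta> * (-((1/s) powr (\<beta>-1-\<alpha>+1))/(\<beta>-1-\<alpha>+1)) = s powr \<alpha> * (1/(\<alpha>-\<beta>))"
    proof -
      have h: "s powr \<beta> / s powr (\<beta>-\<alpha>) = s powr \<alpha>" using powr_diff[of s "\<beta>" "\<beta>-\<alpha>"] by simp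
      have "s powr \<beta> * (1/s) powr (\<beta>-1-\<alpha>+1) = s powr \<alpha>"
        using s h by (simp add: powr_divide)
      moreover have "\<beta>-1-\<alpha>+1 = -(\<alpha>-\<beta>)" by simp
      ultimately show ?thesis by (simp add: divide_simps algebra_simps)
    qed
    show ?thesis by (simp only: mult.assoc e1 e2)
  qed
  also have "\<dots> = ennreal (K * s powr \<alpha> * (1/(2*\<beta>-\<alpha>) + 1/(\<alpha>-\<beta>)))"
    using b K by (subst ennreal_plus[symmetric]) (auto simp: distrib_left)
  finally have "(\<integral>\<^sup>+v. ennreal (phi \<beta> (s * \<bar>\<Psi> v\<bar>)) \<partial>\<pi>) \<le> ennreal (4 powr \<beta>) * ennreal (K * s powr \<alpha> * (1/(2*\<beta>-\<alpha>) + 1/(\<alpha>-\<beta>)))"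
    by (simp add: mult_left_mono)
  also have "\<dots> = ennreal (4 powr \<beta> * (K * s powr \<alpha> * (1/(2*\<beta>-\<alpha>) + 1/(\<alpha>-\<beta>))))"
    using b K by (subst ennreal_mult) auto
  finally show ?thesis .
qed




lemma qpow_le: "1 \<le> \<beta> \<Longrightarrow> \<beta> \<le> \<alpha> \<Longrightarrow> \<alpha> \<le> \<beta> + 1 \<Longrightarrow> \<bar>q::real\<bar> powr \<alpha> \<le> \<bar>q\<bar> powr \<beta> * (1 + \<bar>q\<bar>)"
proof -
  assume b: "1 \<le> \<beta>" "\<beta> \<le> \<alpha>" "\<alpha> \<le> \<beta> + 1"
  show ?thesis
  proof (cases "\<bar>q\<bar> \<le> 1")
    case True
    have "\<bar>q\<bar> powr \<alpha> \<le> \<bar>q\<bar> powr \<beta>"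
      using True b by (cases "q = 0") (auto intro: powr_mono')
    also have "\<dots> \<le> \<bar>q\<bar> powr \<beta> * (1 + \<bar>q\<bar>)" by (simp add: mult_le_cancel_left1)
    finally show ?thesis .
  next
    case False
    have "\<bar>q\<bar> powr \<alpha> \<le> \<bar>q\<bar> powr (\<beta> + 1)" using False b by (intro powr_mono) auto
    also have "\<dots> = \<bar>q\<bar> powr \<beta> * \<bar>q\<bar>" using False by (simp add: powr_add)
    also have "\<dots> \<le> \<bar>q\<bar> powr \<beta> * (1 + \<bar>q\<bar>)" by (intro mult_left_mono) auto
    finally show ?thesis .
  qed
qed

lemma PART2:
  fixes \<pi> :: "'a measure" and \<Psi> :: "'a \<Rightarrow> real" and \<Delta> :: "real set"
  assumes pi_prob: "prob_space \<pi>" and Psi_meas[measurable]: "\<Psi> \<in> borel_measurable \<pi>"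
    and a: "1 < \<alpha>" "\<alpha> < 2" and K: "0 \<le> K"
    and TB: "\<And>t. 0 < t \<Longrightarrow> measure \<pi> {v\<in>space \<pi>. t < \<bar>\<Psi> v\<bar>} \<le> K * t powr (-\<alpha>)"
    and bd: "bounded \<Delta>" and b: "1 \<le> \<beta>" "\<beta> < \<alpha>"
  shows "\<exists>C>0. \<forall>q::real. \<forall>N::nat. N \<ge> 1 \<longrightarrow>
              ennreal (real N) * (\<integral>\<^sup>+ v. (SUP l\<in>\<Delta>.
                   ennreal (cmod (hfun q ((\<Psi> v + l) / real N powr (1/\<alpha>))) powr \<beta>)) \<partial>\<pi>)
              \<le> ennreal (C * \<bar>q\<bar> powr \<beta> * (1 + \<bar>q\<bar>))"
proof -
  interpret prob_space \<pi> by fact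
  obtain D0 where D0: "\<forall>x\<in>\<Delta>. norm x \<le> D0" using bd unfolding bounded_iff by blast
  define D where "D = max D0 1"
  have D: "0 < D" "\<And>l. l \<in> \<Delta> \<Longrightarrow> \<bar>l\<bar> \<le> D" using D0 unfolding D_def by force+
  define c' where "c' = 1/(2*\<beta>-\<alpha>) + 1/(\<alpha>-\<beta>)"
  have c': "0 \<le> c'" unfolding c'_def using a b by auto
  define C where "C = 8 powr \<beta> * (4 powr \<beta> * K * c' + D powr \<alpha>) + 1"
  have C0: "0 \<le> C - 1" unfolding C_def using K c' by simp
  show ?thesis
  proof (intro exI[of _ C] conjI allI impI)
    show "0 < C" using C0 by simp
    fix q :: real and N :: nat assume N: "1 \<le> N"
    have Npos: "0 < real N" using N by simp
    show "ennreal (real N) * (\<integral>\<^sup>+ v. (SUP l\<in>\<Delta>.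
                   ennreal (cmod (hfun q ((\<Psi> v + l) / real N powr (1/\<alpha>))) powr \<beta>)) \<partial>\<pi>)
              \<le> ennreal (C * \<bar>q\<bar> powr \<beta> * (1 + \<bar>q\<bar>))"
    proof (cases "q = 0")
      case True
      have "(\<integral>\<^sup>+ v. (SUP l\<in>\<Delta>. ennreal (cmod (hfun q ((\<Psi> v + l) / real N powr (1/\<alpha>))) powr \<beta>)) \<partial>\<pi>) \<le> (\<integral>\<^sup>+ v. 0 \<partial>\<pi>)"
        using True by (intro nn_integral_mono SUP_least) simp
      then show ?thesis by simp
    next
      case False
      define s where "s = \<bar>q\<bar> / real N powr (1/\<alpha>)"
      have s: "0 < s" unfolding s_def using False Npos by simp
      have Ns: "real N * s powr \<alpha> = \<bar>q\<bar> powr \<alpha>"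
      proof -
        have "s powr \<alpha> = \<bar>q\<bar> powr \<alpha> / (real N powr (1/\<alpha>)) powr \<alpha>" unfolding s_def by (simp add: powr_divide)
        also have "(real N powr (1/\<alpha>)) powr \<alpha> = real N" using a Npos by (simp add: powr_powr)
        finally show ?thesis using Npos by simp
      qed
      have pw: "(SUP l\<in>\<Delta>. ennreal (cmod (hfun q ((\<Psi> v + l) / real N powr (1/\<alpha>))) powr \<beta>))
          \<le> ennreal (8 powr \<beta> * (phi \<beta> (s * \<bar>\<Psi> v\<bar>) + phi \<beta> (s * D)))" for v
      proof (rule SUP_least)
        fix l assume l: "l \<in> \<Delta>"
        have "cmod (hfun q ((\<Psi> v + l) / real N powr (1/\<alpha>))) powr \<beta> \<le> 2 powr \<beta> * phi \<beta> \<bar>q * ((\<Psi> v + l) / real N powr (1/\<alpha>))\<bar>"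
          using b by (intro hfun_phi) auto
        also have "phi \<beta> \<bar>q * ((\<Psi> v + l) / real N powr (1/\<alpha>))\<bar> \<le> phi \<beta> (s * \<bar>\<Psi> v\<bar> + s * D)"
        proof (rule phi_mono)
          have "\<bar>q * ((\<Psi> v + l) / real N powr (1/\<alpha>))\<bar> = s * \<bar>\<Psi> v + l\<bar>"
            unfolding s_def by (simp add: abs_mult)
          also have "\<dots> \<le> s * (\<bar>\<Psi> v\<bar> + D)"
            using D(2)[OF l] s by (intro mult_left_mono) (auto intro: abs_triangle_ineq[THEN order_trans])
          finally show "\<bar>q * ((\<Psi> v + l) / real N powr (1/\<alpha>))\<bar> \<le> s * \<bar>\<Psi> v\<bar> + s * D" by (simp add: distrib_left)
        qed (use b in auto)
        also have "phi \<beta> (s * \<bar>\<Psi> v\<bar> + s * D) \<le> 4 powr \<beta> * (phi \<beta> (s * \<bar>\<Psi> v\<bar>) + phi \<beta> (s * D))"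
          using b s D by (intro phi_sum) auto
        finally have "cmod (hfun q ((\<Psi> v + l) / real N powr (1/\<alpha>))) powr \<beta> \<le> 2 powr \<beta> * (4 powr \<beta> * (phi \<beta> (s * \<bar>\<Psi> v\<bar>) + phi \<beta> (s * D)))"
          by (simp add: mult_left_mono)
        also have "\<dots> = 8 powr \<beta> * (phi \<beta> (s * \<bar>\<Psi> v\<bar>) + phi \<beta> (s * D))"
          by (simp add: powr_mult[symmetric])
        finally show "ennreal (cmod (hfun q ((\<Psi> v + l) / real N powr (1/\<alpha>))) powr \<beta>) \<le> ennreal (8 powr \<beta> * (phi \<beta> (s * \<bar>\<Psi> v\<bar>) + phi \<beta> (s * D)))"
          by (rule ennreal_leI)
      qed
      have pint: "(\<integral>\<^sup>+v. ennreal (phi \<beta> (s * \<bar>\<Psi> v\<bar>)) \<partial>\<pi>) \<le> ennreal (4 powr \<beta> * (K * s powr \<alpha> * c'))"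
        unfolding c'_def using PHI_INT[OF pi_prob Psi_meas b a(2) K TB s] .
      have phim[measurable]: "(\<lambda>v. phi \<beta> (s * \<bar>\<Psi> v\<bar>)) \<in> borel_measurable \<pi>" unfolding phi_def by measurable
      have "(\<integral>\<^sup>+ v. (SUP l\<in>\<Delta>. ennreal (cmod (hfun q ((\<Psi> v + l) / real N powr (1/\<alpha>))) powr \<beta>)) \<partial>\<pi>)
          \<le> (\<integral>\<^sup>+ v. ennreal (8 powr \<beta>) * (ennreal (phi \<beta> (s * \<bar>\<Psi> v\<bar>)) + ennreal (phi \<beta> (s * D))) \<partial>\<pi>)"
        using pw phi_nonneg by (intro nn_integral_mono) (simp add: ennreal_mult ennreal_plus)
      also have "\<dots> = ennreal (8 powr \<beta>) * ((\<integral>\<^sup>+ v. ennreal (phi \<beta> (s * \<bar>\<Psi> v\<bar>)) \<partial>\<pi>) + ennreal (phi \<beta> (s * D)))"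
        by (simp add: nn_integral_cmult nn_integral_add emeasure_space_1)
      also have "\<dots> \<le> ennreal (8 powr \<beta>) * (ennreal (4 powr \<beta> * (K * s powr \<alpha> * c')) + ennreal (phi \<beta> (s * D)))"
        using pint by (intro mult_left_mono add_right_mono) auto
      also have "\<dots> = ennreal (8 powr \<beta> * (4 powr \<beta> * (K * s powr \<alpha> * c') + phi \<beta> (s * D)))"
        using K c' phi_nonneg by (simp add: ennreal_mult ennreal_plus)
      finally have I: "ennreal (real N) * (\<integral>\<^sup>+ v. (SUP l\<in>\<Delta>. ennreal (cmod (hfun q ((\<Psi> v + l) / real N powr (1/\<alpha>))) powr \<beta>)) \<partial>\<pi>)
          \<le> ennreal (real N) * ennreal (8 powr \<beta> * (4 powr \<beta> * (K * s powr \<alpha> * c') + phi \<beta> (s * D)))"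
        by (rule mult_left_mono) simp
      also have "\<dots> = ennreal (real N * (8 powr \<beta> * (4 powr \<beta> * (K * s powr \<alpha> * c') + phi \<beta> (s * D))))"
        using K c' phi_nonneg by (simp add: ennreal_mult)
      also have "\<dots> \<le> ennreal (C * \<bar>q\<bar> powr \<beta> * (1 + \<bar>q\<bar>))"
      proof (rule ennreal_leI)
        have pD: "phi \<beta> (s * D) \<le> (s * D) powr \<alpha>" using b a s D by (intro phi_le_alpha) auto
        have "real N * (8 powr \<beta> * (4 powr \<beta> * (K * s powr \<alpha> * c') + phi \<beta> (s * D)))
            \<le> real N * (8 powr \<beta> * (4 powr \<beta> * (K * s powr \<alpha> * c') + s powr \<alpha> * D powr \<alpha>))"
          using pD s D Npos by (intro mult_left_mono add_left_mono) (auto simp: powr_mult)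
        also have "\<dots> = 8 powr \<beta> * (4 powr \<beta> * K * c' + D powr \<alpha>) * (real N * s powr \<alpha>)"
          by (simp add: algebra_simps)
        also have "\<dots> = (C - 1) * \<bar>q\<bar> powr \<alpha>" unfolding Ns C_def by simp
        also have "\<dots> \<le> (C - 1) * (\<bar>q\<bar> powr \<beta> * (1 + \<bar>q\<bar>))"
          using C0 b a by (intro mult_left_mono qpow_le) auto
        also have "\<dots> \<le> C * \<bar>q\<bar> powr \<beta> * (1 + \<bar>q\<bar>)"
          by (simp add: algebra_simps)
        finally show "real N * (8 powr \<beta> * (4 powr \<beta> * (K * s powr \<alpha> * c') + phi \<beta> (s * D))) \<le> C * \<bar>q\<bar> powr \<beta> * (1 + \<bar>q\<bar>)" .
      qed
      finally show ?thesis .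
    qed
  qed
qed




definition EK :: "real \<Rightarrow> real \<Rightarrow> real \<Rightarrow> real \<Rightarrow> real" where
  "EK \<alpha> \<alpha>1 c Cs = 1/2 + c/(2-\<alpha>) + Cs/(2-\<alpha>-\<alpha>1) + 2*Cs/(\<alpha>+\<alpha>1-1)"

lemma HALF_side:
  fixes \<pi> :: "'a measure" and X :: "'a \<Rightarrow> real" and \<Phi> :: "real \<Rightarrow> real"
  assumes pi_prob: "prob_space \<pi>" and X[measurable]: "X \<in> borel_measurable \<pi>"
    and a: "1 < \<alpha>" "\<alpha> < 2" "0 < \<alpha>1" "\<alpha>1 < 2 - \<alpha>" "0 \<le> c" "0 \<le> Cs" "1 \<le> N"
    and \<Phi>m[measurable]: "\<Phi> \<in> borel_measurable borel"
    and \<Phi>0: "\<And>l. 0 \<le> \<Phi> l" and \<Phi>1: "\<And>l. \<Phi> l \<le> 1"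
    and tl: "\<And>l. 1 \<le> l \<Longrightarrow> \<bar>\<Phi> l - c * l powr (-\<alpha>)\<bar> \<le> Cs * l powr (-\<alpha>-\<alpha>1)"
    and F: "\<And>t. 0 < t \<Longrightarrow> measure \<pi> {x\<in>space \<pi>. t < X x} = \<Phi> (t * N powr (1/\<alpha>))"
  shows "integrable \<pi> (\<lambda>x. if 0 < X x then hfun q (X x) else 0)"
    and "cmod (complex_of_real N * (\<integral>x. (if 0 < X x then hfun q (X x) else 0) \<partial>\<pi>)
              - complex_of_real c * (\<integral>t. (if 0 < t then hder q t * t powr (-\<alpha>) else 0) \<partial>lborel))
         \<le> EK \<alpha> \<alpha>1 c Cs * N powr (-\<alpha>1/\<alpha>) * (\<bar>q\<bar> * (1+\<bar>q\<bar>))"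
proof -
  interpret prob_space \<pi> by fact
  have Npos: "0 < N" using a by simp
  have sf: "sigma_finite_measure \<pi>" by (simp add: prob_space_imp_sigma_finite pi_prob)
  have fin: "\<And>t. 0 < t \<Longrightarrow> emeasure \<pi> {x\<in>space \<pi>. t < X x} < \<infinity>" by (simp add: less_top[symmetric])
  define D where "D = (\<lambda>t. cmod (hder q t) * \<bar>N * \<Phi> (t * N powr (1/\<alpha>)) - c * t powr (-\<alpha>)\<bar>)"
  have EST': "(\<integral>\<^sup>+t. ennreal (D t) * indicator {0<..} t \<partial>lborel)
     \<le> ennreal (EK \<alpha> \<alpha>1 c Cs * N powr (-\<alpha>1/\<alpha>) * (\<bar>q\<bar> * (1+\<bar>q\<bar>)))"
    unfolding D_def EK_def by (rule EST[OF a \<Phi>0 \<Phi>1 tl])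
  have bnd: "(\<integral>\<^sup>+t. indicator {0<..} t * ennreal (cmod (hder q t)) * emeasure \<pi> {x\<in>space \<pi>. t < X x} \<partial>lborel) < \<infinity>"
  proof -
    have "(\<integral>\<^sup>+t. indicator {0<..} t * ennreal (cmod (hder q t)) * emeasure \<pi> {x\<in>space \<pi>. t < X x} \<partial>lborel)
      \<le> (\<integral>\<^sup>+t. ennreal (1/N) * (ennreal (D t) * indicator {0<..} t
             + ennreal c * (ennreal (cmod (hder q t) * t powr (-\<alpha>)) * indicator {0<..} t)) \<partial>lborel)"
    proof (intro nn_integral_mono)
      fix t :: real
      show "indicator {0<..} t * ennreal (cmod (hder q t)) * emeasure \<pi> {x\<in>space \<pi>. t < X x}
        \<le> ennreal (1/N) * (ennreal (D t) * indicator {0<..} t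
             + ennreal c * (ennreal (cmod (hder q t) * t powr (-\<alpha>)) * indicator {0<..} t))"
      proof (cases "0 < t")
        case False then show ?thesis by simp
      next
        case True
        have "cmod (hder q t) * \<Phi> (t * N powr (1/\<alpha>)) \<le> (1/N) * (D t + c * (cmod (hder q t) * t powr (-\<alpha>)))"
        proof -
          have "N * \<Phi> (t * N powr (1/\<alpha>)) \<le> \<bar>N * \<Phi> (t * N powr (1/\<alpha>)) - c * t powr (-\<alpha>)\<bar> + c * t powr (-\<alpha>)"
            by linarith
          then have "cmod (hder q t) * (N * \<Phi> (t * N powr (1/\<alpha>))) \<le> cmod (hder q t) * (\<bar>N * \<Phi> (t * N powr (1/\<alpha>)) - c * t powr (-\<alpha>)\<bar> + c * t powr (-\<alpha>))"
            by (intro mult_left_mono) auto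
          then have "N * (cmod (hder q t) * \<Phi> (t * N powr (1/\<alpha>))) \<le> D t + c * (cmod (hder q t) * t powr (-\<alpha>))"
            unfolding D_def by (simp add: algebra_simps)
          then show ?thesis using Npos by (simp add: field_simps)
        qed
        then have "ennreal (cmod (hder q t) * \<Phi> (t * N powr (1/\<alpha>))) \<le> ennreal ((1/N) * (D t + c * (cmod (hder q t) * t powr (-\<alpha>))))"
          by (rule ennreal_leI)
        also have "\<dots> = ennreal (1/N) * (ennreal (D t) + ennreal c * ennreal (cmod (hder q t) * t powr (-\<alpha>)))"
        proof -
          have Dn: "0 \<le> D t" by (simp add: D_def)
          have Hn: "0 \<le> c * (cmod (hder q t) * t powr (-\<alpha>))" using a by simp
          have "ennreal ((1/N) * (D t + c * (cmod (hder q t) * t powr (-\<alpha>)))) = ennreal (1/N) * ennreal (D t + c * (cmod (hder q t) * t powr (-\<alpha>)))"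
            using Npos Dn Hn by (intro ennreal_mult) auto
          also have "ennreal (D t + c * (cmod (hder q t) * t powr (-\<alpha>))) = ennreal (D t) + ennreal (c * (cmod (hder q t) * t powr (-\<alpha>)))"
            using Dn Hn by (rule ennreal_plus)
          also have "ennreal (c * (cmod (hder q t) * t powr (-\<alpha>))) = ennreal c * ennreal (cmod (hder q t) * t powr (-\<alpha>))"
            using a by (intro ennreal_mult) auto
          finally show ?thesis .
        qed
        finally show ?thesis using True F[OF True] \<Phi>0
          by (simp add: emeasure_eq_measure ennreal_mult[symmetric] mult.commute)
      qed
    qed
    also have "\<dots> = ennreal (1/N) * ((\<integral>\<^sup>+t. ennreal (D t) * indicator {0<..} t \<partial>lborel)
             + ennreal c * (\<integral>\<^sup>+t. ennreal (cmod (hder q t) * t powr (-\<alpha>)) * indicator {0<..} t \<partial>lborel))"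
    proof -
      have mA[measurable]: "(\<lambda>t. ennreal (D t) * indicator {0<..} t) \<in> borel_measurable lborel" unfolding D_def by measurable
      have mB[measurable]: "(\<lambda>t. ennreal (cmod (hder q t) * t powr (-\<alpha>)) * indicator {0<..} t) \<in> borel_measurable lborel" by measurable
      have "(\<integral>\<^sup>+t. ennreal (1/N) * (ennreal (D t) * indicator {0<..} t
             + ennreal c * (ennreal (cmod (hder q t) * t powr (-\<alpha>)) * indicator {0<..} t)) \<partial>lborel)
        = ennreal (1/N) * (\<integral>\<^sup>+t. ennreal (D t) * indicator {0<..} t
             + ennreal c * (ennreal (cmod (hder q t) * t powr (-\<alpha>)) * indicator {0<..} t) \<partial>lborel)"
        by (rule nn_integral_cmult) measurable
      also have "(\<integral>\<^sup>+t. ennreal (D t) * indicator {0<..} t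
             + ennreal c * (ennreal (cmod (hder q t) * t powr (-\<alpha>)) * indicator {0<..} t) \<partial>lborel)
         = (\<integral>\<^sup>+t. ennreal (D t) * indicator {0<..} t \<partial>lborel) + (\<integral>\<^sup>+t. ennreal c * (ennreal (cmod (hder q t) * t powr (-\<alpha>)) * indicator {0<..} t) \<partial>lborel)"
        by (rule nn_integral_add) measurable
      also have "(\<integral>\<^sup>+t. ennreal c * (ennreal (cmod (hder q t) * t powr (-\<alpha>)) * indicator {0<..} t) \<partial>lborel)
         = ennreal c * (\<integral>\<^sup>+t. ennreal (cmod (hder q t) * t powr (-\<alpha>)) * indicator {0<..} t \<partial>lborel)"
        by (rule nn_integral_cmult) measurable
      finally show ?thesis .
    qed
    also have "\<dots> < \<infinity>"
      using EST' FIN[OF a(1,2), of q]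
      by (simp add: ennreal_mult_less_top ennreal_less_top order_le_less_trans[OF _ ennreal_less_top])
    finally show ?thesis .
  qed
  note L = layer_cake[where M=\<pi> and X=X and g="hder q" and G="hfun q", OF sf X hd_cont hfun_deriv hfun_0 fin bnd]
  show "integrable \<pi> (\<lambda>x. if 0 < X x then hfun q (X x) else 0)" by (rule L(1))
  have eqf: "(\<lambda>t. if 0 < t then hder q t * measure \<pi> {x\<in>space \<pi>. t < X x} else 0)
      = (\<lambda>t. if 0 < t then hder q t * \<Phi> (t * N powr (1/\<alpha>)) else 0)"
    using F by (auto simp: fun_eq_iff)
  have i1: "integrable lborel (\<lambda>t. if 0 < t then hder q t * \<Phi> (t * N powr (1/\<alpha>)) else 0)"
    using L(2) unfolding eqf .
  have i2: "integrable lborel (\<lambda>t. if 0 < t then hder q t * t powr (-\<alpha>) else 0)"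
    by (rule nu_lc(1)[OF a(1,2)])
  have "complex_of_real N * (\<integral>x. (if 0 < X x then hfun q (X x) else 0) \<partial>\<pi>)
              - complex_of_real c * (\<integral>t. (if 0 < t then hder q t * t powr (-\<alpha>) else 0) \<partial>lborel)
     = complex_of_real N * (\<integral>t. (if 0 < t then hder q t * \<Phi> (t * N powr (1/\<alpha>)) else 0) \<partial>lborel)
              - complex_of_real c * (\<integral>t. (if 0 < t then hder q t * t powr (-\<alpha>) else 0) \<partial>lborel)"
    using L(3) unfolding eqf by simp
  also have "\<dots> = (\<integral>t. complex_of_real N * (if 0 < t then hder q t * \<Phi> (t * N powr (1/\<alpha>)) else 0)
              - complex_of_real c * (if 0 < t then hder q t * t powr (-\<alpha>) else 0) \<partial>lborel)"
    using i1 i2 by simp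
  also have "\<dots> = (\<integral>t. (if 0 < t then hder q t * complex_of_real (N * \<Phi> (t * N powr (1/\<alpha>)) - c * t powr (-\<alpha>)) else 0) \<partial>lborel)"
    by (intro Bochner_Integration.integral_cong refl) (auto simp: algebra_simps)
  finally have eq: "complex_of_real N * (\<integral>x. (if 0 < X x then hfun q (X x) else 0) \<partial>\<pi>)
              - complex_of_real c * (\<integral>t. (if 0 < t then hder q t * t powr (-\<alpha>) else 0) \<partial>lborel)
      = (\<integral>t. (if 0 < t then hder q t * complex_of_real (N * \<Phi> (t * N powr (1/\<alpha>)) - c * t powr (-\<alpha>)) else 0) \<partial>lborel)" .
  have int3: "integrable lborel (\<lambda>t. (if 0 < t then hder q t * complex_of_real (N * \<Phi> (t * N powr (1/\<alpha>)) - c * t powr (-\<alpha>)) else 0))"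
  proof -
    have "integrable lborel (\<lambda>t. complex_of_real N * (if 0 < t then hder q t * \<Phi> (t * N powr (1/\<alpha>)) else 0)
              - complex_of_real c * (if 0 < t then hder q t * t powr (-\<alpha>) else 0))"
      using i1 i2 by auto
    then show ?thesis by (rule Bochner_Integration.integrable_cong[OF refl, THEN iffD1, rotated]) (auto simp: algebra_simps)
  qed
  have "ennreal (cmod (complex_of_real N * (\<integral>x. (if 0 < X x then hfun q (X x) else 0) \<partial>\<pi>)
              - complex_of_real c * (\<integral>t. (if 0 < t then hder q t * t powr (-\<alpha>) else 0) \<partial>lborel)))
     \<le> (\<integral>\<^sup>+t. ennreal (cmod (if 0 < t then hder q t * complex_of_real (N * \<Phi> (t * N powr (1/\<alpha>)) - c * t powr (-\<alpha>)) else 0)) \<partial>lborel)"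
    unfolding eq by (rule integral_norm_bound_ennreal[OF int3])
  also have "\<dots> = (\<integral>\<^sup>+t. ennreal (D t) * indicator {0<..} t \<partial>lborel)"
    by (intro nn_integral_cong) (auto simp: D_def norm_mult simp del: of_real_diff of_real_mult)
  also have "\<dots> \<le> ennreal (EK \<alpha> \<alpha>1 c Cs * N powr (-\<alpha>1/\<alpha>) * (\<bar>q\<bar> * (1+\<bar>q\<bar>)))" by (rule EST')
  finally show "cmod (complex_of_real N * (\<integral>x. (if 0 < X x then hfun q (X x) else 0) \<partial>\<pi>)
              - complex_of_real c * (\<integral>t. (if 0 < t then hder q t * t powr (-\<alpha>) else 0) \<partial>lborel))
         \<le> EK \<alpha> \<alpha>1 c Cs * N powr (-\<alpha>1/\<alpha>) * (\<bar>q\<bar> * (1+\<bar>q\<bar>))"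
    using a by (subst (asm) ennreal_le_iff) (auto simp: EK_def intro!: mult_nonneg_nonneg add_nonneg_nonneg)
qed




lemma antimono_meas:
  fixes f :: "real \<Rightarrow> real"
  assumes "\<And>x y. x \<le> y \<Longrightarrow> f y \<le> f x"
  shows "f \<in> borel_measurable borel"
proof -
  have "mono (\<lambda>x. f (-x))" using assms by (auto simp: mono_def)
  then have m: "(\<lambda>x. f (-x)) \<in> borel_measurable borel" by (rule borel_measurable_mono)
  have "(\<lambda>x. (\<lambda>x. f (-x)) (-x)) \<in> borel_measurable borel"
    using measurable_compose[OF borel_measurable_uminus[OF measurable_ident_sets[OF refl]] m] by simp
  then show ?thesis by simp
qed

lemma ring_id:
  assumes e1: "(E::complex) = I1 + I2" and e2: "P = -(c1*B1 + c2*B2)"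
  shows "N*E + P = (N*I1 - c1*B1) + (N*I2 - c2*B2)"
  unfolding e1 e2 by (simp add: algebra_simps)

lemma HALF:
  fixes \<pi> :: "'a measure" and \<Psi> :: "'a \<Rightarrow> real"
  assumes pi_prob: "prob_space \<pi>" and Psi_meas[measurable]: "\<Psi> \<in> borel_measurable \<pi>"
    and a: "1 < \<alpha>" "\<alpha> < 2" "0 < \<alpha>1" "\<alpha>1 < 2 - \<alpha>" "0 \<le> cp" "0 \<le> cm" "0 < Cs" "1 \<le> N"
    and tails: "\<And>l. l \<ge> 1 \<Longrightarrow>
        \<bar>measure \<pi> {v \<in> space \<pi>. \<Psi> v > l} - cp * l powr (-\<alpha>)\<bar>
        + \<bar>measure \<pi> {v \<in> space \<pi>. \<Psi> v < - l} - cm * l powr (-\<alpha>)\<bar>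
        \<le> Cs * l powr (-\<alpha> - \<alpha>1)"
  shows "integrable \<pi> (\<lambda>v. hfun q (N powr (-1/\<alpha>) * \<Psi> v))"
    and "cmod (complex_of_real N * (\<integral>v. hfun q (N powr (-1/\<alpha>) * \<Psi> v) \<partial>\<pi>) + psi_exp \<alpha> cp cm q)
          \<le> (EK \<alpha> \<alpha>1 cp Cs + EK \<alpha> \<alpha>1 cm Cs) * N powr (-\<alpha>1/\<alpha>) * (\<bar>q\<bar> * (1+\<bar>q\<bar>))"
proof -
  interpret prob_space \<pi> by fact
  define A where "A = N powr (-1/\<alpha>)"
  have Npos: "0 < N" using a by simp
  have Apos: "0 < A" unfolding A_def using Npos by simp
  have AN: "A * N powr (1/\<alpha>) = 1" unfolding A_def using Npos by (simp add: powr_add[symmetric])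
  define \<Phi>p where "\<Phi>p = (\<lambda>l. measure \<pi> {v\<in>space \<pi>. l < \<Psi> v})"
  define \<Phi>m where "\<Phi>m = (\<lambda>l. measure \<pi> {v\<in>space \<pi>. l < - \<Psi> v})"
  have \<Phi>pm: "\<Phi>p \<in> borel_measurable borel" unfolding \<Phi>p_def
    by (rule antimono_meas, rule finite_measure_mono) auto
  have \<Phi>mm: "\<Phi>m \<in> borel_measurable borel" unfolding \<Phi>m_def
    by (rule antimono_meas, rule finite_measure_mono) auto
  have tlp: "\<bar>\<Phi>p l - cp * l powr (-\<alpha>)\<bar> \<le> Cs * l powr (-\<alpha>-\<alpha>1)" if "1 \<le> l" for l
    using tails[OF that] unfolding \<Phi>p_def by (smt (verit) Collect_cong)
  have setm: "{v\<in>space \<pi>. l < - \<Psi> v} = {v\<in>space \<pi>. \<Psi> v < - l}" for l by auto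
  have tlm: "\<bar>\<Phi>m l - cm * l powr (-\<alpha>)\<bar> \<le> Cs * l powr (-\<alpha>-\<alpha>1)" if "1 \<le> l" for l
    using tails[OF that] unfolding \<Phi>m_def setm by linarith
  have Fp: "measure \<pi> {x\<in>space \<pi>. t < A * \<Psi> x} = \<Phi>p (t * N powr (1/\<alpha>))" if "0 < t" for t
  proof -
    have "t < A * \<Psi> x \<longleftrightarrow> t * N powr (1/\<alpha>) < \<Psi> x" for x
    proof -
      have "t < A * \<Psi> x \<longleftrightarrow> t * N powr (1/\<alpha>) < (A * \<Psi> x) * N powr (1/\<alpha>)"
        by (rule mult_less_cancel_right_pos[symmetric]) (use Npos in simp)
      also have "(A * \<Psi> x) * N powr (1/\<alpha>) = \<Psi> x" using AN by (simp add: algebra_simps)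
      finally show ?thesis .
    qed
    then show ?thesis unfolding \<Phi>p_def by simp
  qed
  have Fm: "measure \<pi> {x\<in>space \<pi>. t < - (A * \<Psi> x)} = \<Phi>m (t * N powr (1/\<alpha>))" if "0 < t" for t
  proof -
    have "t < - (A * \<Psi> x) \<longleftrightarrow> t * N powr (1/\<alpha>) < - \<Psi> x" for x
    proof -
      have "t < - (A * \<Psi> x) \<longleftrightarrow> t * N powr (1/\<alpha>) < (- (A * \<Psi> x)) * N powr (1/\<alpha>)"
        by (rule mult_less_cancel_right_pos[symmetric]) (use Npos in simp)
      also have "(- (A * \<Psi> x)) * N powr (1/\<alpha>) = - \<Psi> x" using AN by (simp add: algebra_simps)
      finally show ?thesis .
    qed
    then show ?thesis unfolding \<Phi>m_def by simp
  qed
  have p0: "\<And>l. 0 \<le> \<Phi>p l" "\<And>l. \<Phi>p l \<le> 1" "\<And>l. 0 \<le> \<Phi>m l" "\<And>l. \<Phi>m l \<le> 1"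
    unfolding \<Phi>p_def \<Phi>m_def by auto
  have ap: "1 < \<alpha>" "\<alpha> < 2" "0 < \<alpha>1" "\<alpha>1 < 2 - \<alpha>" "0 \<le> cp" "0 \<le> Cs" "1 \<le> N" using a by auto
  have am: "1 < \<alpha>" "\<alpha> < 2" "0 < \<alpha>1" "\<alpha>1 < 2 - \<alpha>" "0 \<le> cm" "0 \<le> Cs" "1 \<le> N" using a by auto
  have Xp: "(\<lambda>v. A * \<Psi> v) \<in> borel_measurable \<pi>" by measurable
  have Xm: "(\<lambda>v. - (A * \<Psi> v)) \<in> borel_measurable \<pi>" by measurable
  note SP = HALF_side[OF pi_prob Xp ap \<Phi>pm p0(1,2) tlp Fp, of q]
  note SM = HALF_side[OF pi_prob Xm am \<Phi>mm p0(3,4) tlm Fm, of "-q"]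
  have dec: "hfun q (A * \<Psi> v) = (if 0 < A * \<Psi> v then hfun q (A * \<Psi> v) else 0)
        + (if 0 < - (A * \<Psi> v) then hfun (-q) (- (A * \<Psi> v)) else 0)" for v
    using hfun_neg[of "-q" "A * \<Psi> v"] by auto
  have int: "integrable \<pi> (\<lambda>v. hfun q (A * \<Psi> v))"
    by (subst dec) (intro Bochner_Integration.integrable_add SP(1) SM(1))
  then show "integrable \<pi> (\<lambda>v. hfun q (N powr (-1/\<alpha>) * \<Psi> v))" unfolding A_def .
  have "(\<integral>v. hfun q (A * \<Psi> v) \<partial>\<pi>) = (\<integral>v. (if 0 < A * \<Psi> v then hfun q (A * \<Psi> v) else 0) \<partial>\<pi>)
       + (\<integral>v. (if 0 < - (A * \<Psi> v) then hfun (-q) (- (A * \<Psi> v)) else 0) \<partial>\<pi>)"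
    by (subst dec) (intro Bochner_Integration.integral_add SP(1) SM(1))
  moreover note PSI[OF a(1,2), of cp cm q]
  ultimately have "complex_of_real N * (\<integral>v. hfun q (A * \<Psi> v) \<partial>\<pi>) + psi_exp \<alpha> cp cm q
     = (complex_of_real N * (\<integral>v. (if 0 < A * \<Psi> v then hfun q (A * \<Psi> v) else 0) \<partial>\<pi>)
          - complex_of_real cp * (\<integral>t. (if 0 < t then hder q t * t powr (-\<alpha>) else 0) \<partial>lborel))
     + (complex_of_real N * (\<integral>v. (if 0 < - (A * \<Psi> v) then hfun (-q) (- (A * \<Psi> v)) else 0) \<partial>\<pi>)
          - complex_of_real cm * (\<integral>t. (if 0 < t then hder (-q) t * t powr (-\<alpha>) else 0) \<partial>lborel))"
    by (rule ring_id)
  then have "cmod (complex_of_real N * (\<integral>v. hfun q (A * \<Psi> v) \<partial>\<pi>) + psi_exp \<alpha> cp cm q)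
      \<le> cmod (complex_of_real N * (\<integral>v. (if 0 < A * \<Psi> v then hfun q (A * \<Psi> v) else 0) \<partial>\<pi>)
          - complex_of_real cp * (\<integral>t. (if 0 < t then hder q t * t powr (-\<alpha>) else 0) \<partial>lborel))
     + cmod (complex_of_real N * (\<integral>v. (if 0 < - (A * \<Psi> v) then hfun (-q) (- (A * \<Psi> v)) else 0) \<partial>\<pi>)
          - complex_of_real cm * (\<integral>t. (if 0 < t then hder (-q) t * t powr (-\<alpha>) else 0) \<partial>lborel))"
    by (simp only: norm_triangle_ineq)
  also have "\<dots> \<le> EK \<alpha> \<alpha>1 cp Cs * N powr (-\<alpha>1/\<alpha>) * (\<bar>q\<bar> * (1+\<bar>q\<bar>)) + EK \<alpha> \<alpha>1 cm Cs * N powr (-\<alpha>1/\<alpha>) * (\<bar>-q\<bar> * (1+\<bar>-q\<bar>))"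
    using SP(2) SM(2) by (rule add_mono)
  finally have "cmod (complex_of_real N * (\<integral>v. hfun q (A * \<Psi> v) \<partial>\<pi>) + psi_exp \<alpha> cp cm q)
      \<le> EK \<alpha> \<alpha>1 cp Cs * N powr (-\<alpha>1/\<alpha>) * (\<bar>q\<bar> * (1+\<bar>q\<bar>)) + EK \<alpha> \<alpha>1 cm Cs * N powr (-\<alpha>1/\<alpha>) * (\<bar>-q\<bar> * (1+\<bar>-q\<bar>))" .
  then show "cmod (complex_of_real N * (\<integral>v. hfun q (N powr (-1/\<alpha>) * \<Psi> v) \<partial>\<pi>) + psi_exp \<alpha> cp cm q)
          \<le> (EK \<alpha> \<alpha>1 cp Cs + EK \<alpha> \<alpha>1 cm Cs) * N powr (-\<alpha>1/\<alpha>) * (\<bar>q\<bar> * (1+\<bar>q\<bar>))"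
    unfolding A_def by (simp add: algebra_simps)
qed




lemma trans_prob_meas:
  assumes pi_prob: "prob_space \<pi>" and kernel: "density_kernel \<pi> p" and B: "B \<in> sets \<pi>"
  shows "(\<lambda>w. trans_prob \<pi> p w B) \<in> borel_measurable \<pi>"
proof -
  interpret prob_space \<pi> by fact
  have pm[measurable]: "(\<lambda>x. p (fst x) (snd x)) \<in> borel_measurable (\<pi> \<Otimes>\<^sub>M \<pi>)"
    using kernel by (simp add: density_kernel_def case_prod_beta')
  have "(\<lambda>(w,v). indicator B v * p w v) \<in> borel_measurable (\<pi> \<Otimes>\<^sub>M \<pi>)"
    using B by (simp add: case_prod_beta') measurable
  then have "(\<lambda>w. \<integral>v. indicator B v * p w v \<partial>\<pi>) \<in> borel_measurable \<pi>"
    by (rule borel_measurable_lebesgue_integral)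
  then show ?thesis by (simp add: trans_prob_def)
qed

lemma trans_op_meas:
  assumes pi_prob: "prob_space \<pi>" and kernel: "density_kernel \<pi> p" and f[measurable]: "f \<in> borel_measurable \<pi>"
  shows "(\<lambda>w. trans_op \<pi> p f w) \<in> borel_measurable \<pi>"
proof -
  interpret prob_space \<pi> by fact
  have pm[measurable]: "(\<lambda>x. p (fst x) (snd x)) \<in> borel_measurable (\<pi> \<Otimes>\<^sub>M \<pi>)"
    using kernel by (simp add: density_kernel_def case_prod_beta')
  have "(\<lambda>(w,v). p w v * f v) \<in> borel_measurable (\<pi> \<Otimes>\<^sub>M \<pi>)"
    by (simp add: case_prod_beta') measurable
  then have "(\<lambda>w. \<integral>v. p w v * f v \<partial>\<pi>) \<in> borel_measurable \<pi>"
    by (rule borel_measurable_lebesgue_integral)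
  then show ?thesis by (simp add: trans_op_def)
qed

lemma markov_basic:
  assumes "markov_chain M \<xi> \<pi> p"
  shows "prob_space M" "\<And>n. \<xi> n \<in> M \<rightarrow>\<^sub>M \<pi>" "distr M \<pi> (\<xi> 0) = \<pi>"
  using assms by (auto simp: markov_chain_def)

lemma markov_distr1:
  assumes chain: "markov_chain M \<xi> \<pi> p" and inv: "invariant_measure \<pi> p"
    and kernel: "density_kernel \<pi> p" and pi_prob: "prob_space \<pi>"
  shows "distr M \<pi> (\<xi> 1) = \<pi>"
proof -
  have Mp: "prob_space M" and xm: "\<And>n. \<xi> n \<in> M \<rightarrow>\<^sub>M \<pi>" and d0: "distr M \<pi> (\<xi> 0) = \<pi>"
    using markov_basic[OF chain] by auto
  interpret M: prob_space M by fact
  interpret P: prob_space \<pi> by fact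
  have mp: "\<forall>n A B. (\<forall>i. A i \<in> sets \<pi>) \<longrightarrow> B \<in> sets \<pi> \<longrightarrow>
        measure M {\<omega> \<in> space M. (\<forall>i\<le>n. \<xi> i \<omega> \<in> A i) \<and> \<xi> (Suc n) \<omega> \<in> B}
        = (\<integral>\<omega>. indicator {\<omega> \<in> space M. \<forall>i\<le>n. \<xi> i \<omega> \<in> A i} \<omega> * trans_prob \<pi> p (\<xi> n \<omega>) B \<partial>M)"
    using chain by (simp add: markov_chain_def)
  have eq: "measure M (\<xi> 1 -` B \<inter> space M) = measure \<pi> B" if B: "B \<in> sets \<pi>" for B
  proof -
    have s0: "\<xi> 0 \<omega> \<in> space \<pi>" if "\<omega> \<in> space M" for \<omega> using xm[of 0] that by (auto simp: measurable_def)
    have "measure M {\<omega> \<in> space M. (\<forall>i\<le>0. \<xi> i \<omega> \<in> space \<pi>) \<and> \<xi> (Suc 0) \<omega> \<in> B}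
        = (\<integral>\<omega>. indicator {\<omega> \<in> space M. \<forall>i\<le>0. \<xi> i \<omega> \<in> space \<pi>} \<omega> * trans_prob \<pi> p (\<xi> 0 \<omega>) B \<partial>M)"
      using mp[rule_format, of "\<lambda>i. space \<pi>" B 0] B by simp
    moreover have "{\<omega> \<in> space M. (\<forall>i\<le>0. \<xi> i \<omega> \<in> space \<pi>) \<and> \<xi> (Suc 0) \<omega> \<in> B} = \<xi> 1 -` B \<inter> space M"
      using s0 by auto
    moreover have "(\<integral>\<omega>. indicator {\<omega> \<in> space M. \<forall>i\<le>0. \<xi> i \<omega> \<in> space \<pi>} \<omega> * trans_prob \<pi> p (\<xi> 0 \<omega>) B \<partial>M)
        = (\<integral>\<omega>. trans_prob \<pi> p (\<xi> 0 \<omega>) B \<partial>M)"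
      using s0 by (intro Bochner_Integration.integral_cong refl) (auto simp: indicator_def)
    moreover have "(\<integral>\<omega>. trans_prob \<pi> p (\<xi> 0 \<omega>) B \<partial>M) = (\<integral>w. trans_prob \<pi> p w B \<partial>distr M \<pi> (\<xi> 0))"
      by (rule integral_distr[symmetric, OF xm trans_prob_meas[OF pi_prob kernel B]])
    moreover have "(\<integral>w. trans_prob \<pi> p w B \<partial>\<pi>) = measure \<pi> B"
      using inv B by (simp add: invariant_measure_def)
    ultimately show ?thesis using d0 by simp
  qed
  show ?thesis
  proof (rule measure_eqI)
    show "sets (distr M \<pi> (\<xi> 1)) = sets \<pi>" by simp
    fix B assume "B \<in> sets (distr M \<pi> (\<xi> 1))"
    then have B: "B \<in> sets \<pi>" by simp
    have "emeasure (distr M \<pi> (\<xi> 1)) B = emeasure M (\<xi> 1 -` B \<inter> space M)"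
      using B xm by (simp add: emeasure_distr)
    also have "\<dots> = ennreal (measure M (\<xi> 1 -` B \<inter> space M))" by (simp add: M.emeasure_eq_measure)
    also have "\<dots> = emeasure \<pi> B" using eq[OF B] by (simp add: P.emeasure_eq_measure)
    finally show "emeasure (distr M \<pi> (\<xi> 1)) B = emeasure \<pi> B" .
  qed
qed

lemma Pchi_bound:
  assumes pi_prob: "prob_space \<pi>" and kernel: "density_kernel \<pi> p"
    and chi[measurable]: "chi \<in> borel_measurable \<pi>" and ci: "integrable \<pi> chi"
  shows "\<exists>K\<ge>0. AE w in \<pi>. \<bar>trans_op \<pi> p chi w\<bar> \<le> K"
proof -
  interpret prob_space \<pi> by fact
  interpret PP: pair_sigma_finite \<pi> \<pi>
    by (simp add: pair_sigma_finite_def prob_space_imp_sigma_finite pi_prob)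
  obtain B where B: "AE x in \<pi> \<Otimes>\<^sub>M \<pi>. case x of (w, v) \<Rightarrow> p w v \<le> B"
    using kernel by (auto simp: density_kernel_def)
  have p0: "\<And>w v. 0 \<le> p w v" using kernel by (simp add: density_kernel_def)
  have AEB: "AE w in \<pi>. AE v in \<pi>. p w v \<le> B" using PP.AE_pair[OF B] by simp
  define B' where "B' = max B 0"
  have "AE w in \<pi>. \<bar>trans_op \<pi> p chi w\<bar> \<le> B' * (\<integral>v. \<bar>chi v\<bar> \<partial>\<pi>)"
    using AEB
  proof eventually_elim
    case (elim w)
    show ?case
    proof (cases "integrable \<pi> (\<lambda>v. p w v * chi v)")
      case True
      have "\<bar>trans_op \<pi> p chi w\<bar> \<le> (\<integral>v. \<bar>p w v * chi v\<bar> \<partial>\<pi>)"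
        unfolding trans_op_def by (rule integral_abs_bound)
      also have "\<dots> \<le> (\<integral>v. B' * \<bar>chi v\<bar> \<partial>\<pi>)"
      proof (rule integral_mono_AE)
        show "integrable \<pi> (\<lambda>v. \<bar>p w v * chi v\<bar>)" using True by auto
        show "integrable \<pi> (\<lambda>v. B' * \<bar>chi v\<bar>)" using ci by auto
        show "AE v in \<pi>. \<bar>p w v * chi v\<bar> \<le> B' * \<bar>chi v\<bar>"
          using elim
        proof eventually_elim
          case (elim v)
          then have "p w v \<le> B'" unfolding B'_def by simp
          then show ?case using p0[of w v] by (simp add: abs_mult mult_right_mono)
        qed
      qed
      also have "\<dots> = B' * (\<integral>v. \<bar>chi v\<bar> \<partial>\<pi>)" by simp
      finally show ?thesis .
    next
      case False
      then have "trans_op \<pi> p chi w = 0" unfolding trans_op_def by (simp add: not_integrable_integral_eq)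
      then show ?thesis unfolding B'_def by simp
    qed
  qed
  moreover have "0 \<le> B' * (\<integral>v. \<bar>chi v\<bar> \<partial>\<pi>)" unfolding B'_def by simp
  ultimately show ?thesis by blast
qed




lemma EK_nonneg: "1 < \<alpha> \<Longrightarrow> \<alpha> < 2 \<Longrightarrow> 0 < \<alpha>1 \<Longrightarrow> \<alpha>1 < 2 - \<alpha> \<Longrightarrow> 0 \<le> c \<Longrightarrow> 0 \<le> Cs \<Longrightarrow> 0 \<le> EK \<alpha> \<alpha>1 c Cs"
  unfolding EK_def by (intro add_nonneg_nonneg divide_nonneg_pos) auto

lemma PART1:
  fixes \<pi> :: "'a measure" and p :: "'a \<Rightarrow> 'a \<Rightarrow> real"
    and M :: "'b measure" and \<xi> :: "nat \<Rightarrow> 'b \<Rightarrow> 'a"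
    and \<Psi> chi :: "'a \<Rightarrow> real"
  assumes pi_prob: "prob_space \<pi>" and kernel: "density_kernel \<pi> p"
    and chain: "markov_chain M \<xi> \<pi> p" and invariant: "invariant_measure \<pi> p"
    and Psi_meas[measurable]: "\<Psi> \<in> borel_measurable \<pi>" and Psi_int: "integrable \<pi> \<Psi>"
    and a: "1 < \<alpha>" "\<alpha> < 2" "0 < \<alpha>1" "\<alpha>1 < 2 - \<alpha>" "0 \<le> cp" "0 \<le> cm" "0 < Cs"
    and tails: "\<And>l. l \<ge> 1 \<Longrightarrow>
        \<bar>measure \<pi> {v \<in> space \<pi>. \<Psi> v > l} - cp * l powr (-\<alpha>)\<bar>
        + \<bar>measure \<pi> {v \<in> space \<pi>. \<Psi> v < - l} - cm * l powr (-\<alpha>)\<bar>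
        \<le> Cs * l powr (-\<alpha> - \<alpha>1)"
    and chi_meas[measurable]: "chi \<in> borel_measurable \<pi>" and chi_int: "integrable \<pi> chi"
    and chi_eq: "AE w in \<pi>. chi w - trans_op \<pi> p chi w = \<Psi> w"
  shows "\<exists>C>0. \<forall>q::real. \<forall>N::nat. N \<ge> 1 \<longrightarrow>
            cmod (- of_nat N *
                    (\<integral>\<omega>. hfun q (real N powr (-1/\<alpha>) * (chi (\<xi> 1 \<omega>) - trans_op \<pi> p chi (\<xi> 0 \<omega>))) \<partial>M)
                  - psi_exp \<alpha> cp cm q)
            \<le> C / real N powr (\<alpha>1 / \<alpha>) * \<bar>q\<bar> * (1 + \<bar>q\<bar>)"
proof -
  have Mp: "prob_space M" and xm: "\<And>n. \<xi> n \<in> M \<rightarrow>\<^sub>M \<pi>" and d0: "distr M \<pi> (\<xi> 0) = \<pi>"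
    using markov_basic[OF chain] by auto
  have d1: "distr M \<pi> (\<xi> 1) = \<pi>" by (rule markov_distr1[OF chain invariant kernel pi_prob])
  interpret M: prob_space M by fact
  interpret P: prob_space \<pi> by fact
  have xm0[measurable]: "\<xi> 0 \<in> M \<rightarrow>\<^sub>M \<pi>" and xm1[measurable]: "\<xi> 1 \<in> M \<rightarrow>\<^sub>M \<pi>" using xm by auto
  have Pm[measurable]: "(\<lambda>w. trans_op \<pi> p chi w) \<in> borel_measurable \<pi>"
    by (rule trans_op_meas[OF pi_prob kernel chi_meas])
  obtain K where K: "0 \<le> K" "AE w in \<pi>. \<bar>trans_op \<pi> p chi w\<bar> \<le> K"
    using Pchi_bound[OF pi_prob kernel chi_meas chi_int] by blast
  have aeT: "AE \<omega> in M. P (\<xi> n \<omega>)" if "AE w in \<pi>. P w" "distr M \<pi> (\<xi> n) = \<pi>" for P n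
  proof -
    have "AE x in distr M \<pi> (\<xi> n). P x" using that(1) by (simp only: that(2))
    then show ?thesis by (rule AE_distrD[OF xm])
  qed
  have ae1: "AE \<omega> in M. chi (\<xi> 1 \<omega>) - trans_op \<pi> p chi (\<xi> 1 \<omega>) = \<Psi> (\<xi> 1 \<omega>)" by (rule aeT[OF chi_eq d1])
  have ae2: "AE \<omega> in M. \<bar>trans_op \<pi> p chi (\<xi> 1 \<omega>)\<bar> \<le> K" by (rule aeT[OF K(2) d1])
  have ae3: "AE \<omega> in M. \<bar>trans_op \<pi> p chi (\<xi> 0 \<omega>)\<bar> \<le> K" by (rule aeT[OF K(2) d0])
  have PsiA: "integrable M (\<lambda>\<omega>. \<Psi> (\<xi> 1 \<omega>))"
    using Psi_int d1 integrable_distr_eq[OF xm1 Psi_meas] by simp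
  have PsiAbs: "(\<integral>\<omega>. \<bar>\<Psi> (\<xi> 1 \<omega>)\<bar> \<partial>M) = (\<integral>v. \<bar>\<Psi> v\<bar> \<partial>\<pi>)"
    using integral_distr[OF xm1, of "\<lambda>v. \<bar>\<Psi> v\<bar>"] d1 by simp
  define C1 where "C1 = 2*K^2 + 2*K*(\<integral>v. \<bar>\<Psi> v\<bar> \<partial>\<pi>)"
  have C1: "0 \<le> C1" unfolding C1_def using K by simp
  define EKs where "EKs = EK \<alpha> \<alpha>1 cp Cs + EK \<alpha> \<alpha>1 cm Cs"
  have EKs: "0 \<le> EKs" unfolding EKs_def using a by (intro add_nonneg_nonneg EK_nonneg) auto
  define C where "C = C1 + EKs + 1"
  show ?thesis
  proof (intro exI[of _ C] conjI allI impI)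
    show "0 < C" unfolding C_def using C1 EKs by simp
    fix q :: real and N :: nat assume N: "1 \<le> N"
    define Nr where "Nr = real N"
    have Nr: "1 \<le> Nr" "0 < Nr" using N unfolding Nr_def by auto
    define A where "A = Nr powr (-1/\<alpha>)"
    have Apos: "0 < A" unfolding A_def using Nr by simp
    define f1 where "f1 = (\<lambda>\<omega>. hfun q (A * (chi (\<xi> 1 \<omega>) - trans_op \<pi> p chi (\<xi> 0 \<omega>))))"
    define f2 where "f2 = (\<lambda>\<omega>. hfun q (A * \<Psi> (\<xi> 1 \<omega>)))"
    define u where "u = (\<lambda>\<omega>. q^2 * A^2 * (2*K^2 + 2*K*\<bar>\<Psi> (\<xi> 1 \<omega>)\<bar>))"
    note H = HALF[OF pi_prob Psi_meas a Nr(1) tails, of q]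
    have f1m[measurable]: "f1 \<in> borel_measurable M" unfolding f1_def by measurable
    have f2m[measurable]: "f2 \<in> borel_measurable M" unfolding f2_def by measurable
    have f2i: "integrable M f2"
    proof -
      have "integrable (distr M \<pi> (\<xi> 1)) (\<lambda>v. hfun q (A * \<Psi> v))" using H(1) d1 unfolding A_def by simp
      then show ?thesis unfolding f2_def by (subst (asm) integrable_distr_eq[OF xm1]) auto
    qed
    have ui: "integrable M u" unfolding u_def using PsiA by auto
    have bnd: "AE \<omega> in M. cmod (f1 \<omega> - f2 \<omega>) \<le> u \<omega>"
      using ae1 ae2 ae3
    proof eventually_elim
      case (elim \<omega>)
      define Y where "Y = \<Psi> (\<xi> 1 \<omega>)"
      define b where "b = trans_op \<pi> p chi (\<xi> 1 \<omega>) - trans_op \<pi> p chi (\<xi> 0 \<omega>)"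
      have bK: "\<bar>b\<bar> \<le> 2*K" unfolding b_def using elim(2,3) by linarith
      have "A * (chi (\<xi> 1 \<omega>) - trans_op \<pi> p chi (\<xi> 0 \<omega>)) = A*Y + A*b"
        unfolding Y_def b_def using elim(1) by (simp add: algebra_simps)
      then have "cmod (f1 \<omega> - f2 \<omega>) = cmod (hfun q (A*Y + A*b) - hfun q (A*Y))"
        unfolding f1_def f2_def Y_def by simp
      also have "\<dots> \<le> (q*(A*b))^2/2 + \<bar>q*(A*b)\<bar> * \<bar>q*(A*Y)\<bar>" by (rule hfun_diff_le)
      also have "\<dots> = q^2 * A^2 * (b^2/2 + \<bar>b\<bar> * \<bar>Y\<bar>)"
        using Apos by (simp add: power_mult_distrib abs_mult algebra_simps power2_eq_square)
      also have "\<dots> \<le> q^2 * A^2 * (2*K^2 + 2*K*\<bar>Y\<bar>)"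
      proof (intro mult_left_mono add_mono)
        have "\<bar>b\<bar>^2 \<le> (2*K)^2" by (rule power_mono[OF bK]) simp
        then have "b^2 \<le> (2*K)^2" by simp
        then show "b^2/2 \<le> 2*K^2" by (simp add: power_mult_distrib)
        show "\<bar>b\<bar> * \<bar>Y\<bar> \<le> 2*K*\<bar>Y\<bar>" using bK by (intro mult_right_mono) auto
      qed auto
      finally show ?case unfolding u_def Y_def .
    qed
    have f1i: "integrable M f1"
    proof (rule Bochner_Integration.integrable_bound[of _ "\<lambda>\<omega>. cmod (f2 \<omega>) + u \<omega>"])
      show "integrable M (\<lambda>\<omega>. cmod (f2 \<omega>) + u \<omega>)" using f2i ui by auto
      show "AE \<omega> in M. norm (f1 \<omega>) \<le> norm (cmod (f2 \<omega>) + u \<omega>)"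
        using bnd
      proof eventually_elim
        case (elim \<omega>)
        have "cmod (f1 \<omega>) \<le> cmod (f2 \<omega>) + cmod (f1 \<omega> - f2 \<omega>)" by (metis norm_triangle_sub add.commute)
        also have "\<dots> \<le> cmod (f2 \<omega>) + u \<omega>" using elim by simp
        also have "\<dots> \<le> norm (cmod (f2 \<omega>) + u \<omega>)" by simp
        finally show ?case by simp
      qed
    qed simp
    have d12: "cmod ((\<integral>\<omega>. f1 \<omega> \<partial>M) - (\<integral>\<omega>. f2 \<omega> \<partial>M)) \<le> q^2 * A^2 * C1"
    proof -
      have "cmod ((\<integral>\<omega>. f1 \<omega> \<partial>M) - (\<integral>\<omega>. f2 \<omega> \<partial>M)) = cmod (\<integral>\<omega>. f1 \<omega> - f2 \<omega> \<partial>M)"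
        using f1i f2i by simp
      also have "\<dots> \<le> (\<integral>\<omega>. cmod (f1 \<omega> - f2 \<omega>) \<partial>M)" by (rule integral_norm_bound)
      also have "\<dots> \<le> (\<integral>\<omega>. u \<omega> \<partial>M)"
        using bnd f1i f2i ui by (intro integral_mono_AE) auto
      also have "\<dots> = q^2 * A^2 * C1"
        unfolding u_def C1_def using PsiA PsiAbs by (simp add: algebra_simps M.prob_space)
      finally show ?thesis .
    qed
    have e2: "(\<integral>\<omega>. f2 \<omega> \<partial>M) = (\<integral>v. hfun q (Nr powr (-1/\<alpha>) * \<Psi> v) \<partial>\<pi>)"
      using integral_distr[OF xm1, of "\<lambda>v. hfun q (A * \<Psi> v)"] d1 unfolding f2_def A_def by simp
    have NA: "Nr * A^2 \<le> Nr powr (-\<alpha>1/\<alpha>)"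
    proof -
      have "Nr * A^2 = Nr powr 1 * (Nr powr (-1/\<alpha>) * Nr powr (-1/\<alpha>))"
        unfolding A_def using Nr by (simp add: power2_eq_square)
      also have "\<dots> = Nr powr (1 + (-1/\<alpha> + -1/\<alpha>))" by (simp only: powr_add)
      also have "\<dots> \<le> Nr powr (-\<alpha>1/\<alpha>)"
      proof (rule powr_mono)
        have "(\<alpha> - 2)/\<alpha> \<le> (-\<alpha>1)/\<alpha>" using a by (intro divide_right_mono) auto
        moreover have "1 + (-1/\<alpha> + -1/\<alpha>) = (\<alpha>-2)/\<alpha>" using a by (simp add: field_simps)
        ultimately show "1 + (-1/\<alpha> + -1/\<alpha>) \<le> -\<alpha>1/\<alpha>" by simp
      qed (use Nr in auto)
      finally show ?thesis .
    qed
    have qq: "q^2 \<le> \<bar>q\<bar> * (1 + \<bar>q\<bar>)" by (simp add: algebra_simps power2_eq_square)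
    have Nn: "Nr powr (-\<alpha>1/\<alpha>) = 1 / Nr powr (\<alpha>1/\<alpha>)" by (simp add: powr_minus_divide)
    have "- of_nat N * (\<integral>\<omega>. f1 \<omega> \<partial>M) - psi_exp \<alpha> cp cm q
        = - (complex_of_real Nr * ((\<integral>\<omega>. f1 \<omega> \<partial>M) - (\<integral>\<omega>. f2 \<omega> \<partial>M))
             + (complex_of_real Nr * (\<integral>\<omega>. f2 \<omega> \<partial>M) + psi_exp \<alpha> cp cm q))"
      unfolding Nr_def by (simp add: algebra_simps)
    then have "cmod (- of_nat N * (\<integral>\<omega>. f1 \<omega> \<partial>M) - psi_exp \<alpha> cp cm q)
        = cmod (complex_of_real Nr * ((\<integral>\<omega>. f1 \<omega> \<partial>M) - (\<integral>\<omega>. f2 \<omega> \<partial>M))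
             + (complex_of_real Nr * (\<integral>\<omega>. f2 \<omega> \<partial>M) + psi_exp \<alpha> cp cm q))"
      by (simp only: norm_minus_cancel)
    also have "\<dots> \<le> Nr * cmod ((\<integral>\<omega>. f1 \<omega> \<partial>M) - (\<integral>\<omega>. f2 \<omega> \<partial>M))
             + cmod (complex_of_real Nr * (\<integral>\<omega>. f2 \<omega> \<partial>M) + psi_exp \<alpha> cp cm q)"
    proof -
      have "cmod (complex_of_real Nr * ((\<integral>\<omega>. f1 \<omega> \<partial>M) - (\<integral>\<omega>. f2 \<omega> \<partial>M)))
        = Nr * cmod ((\<integral>\<omega>. f1 \<omega> \<partial>M) - (\<integral>\<omega>. f2 \<omega> \<partial>M))"
        using Nr by (simp only: norm_mult norm_of_real)
      then show ?thesis using norm_triangle_ineq by metis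
    qed
    also have "\<dots> \<le> Nr * (q^2 * A^2 * C1) + EKs * Nr powr (-\<alpha>1/\<alpha>) * (\<bar>q\<bar> * (1+\<bar>q\<bar>))"
    proof -
      have H2: "cmod (complex_of_real Nr * (\<integral>v. hfun q (Nr powr (-1/\<alpha>) * \<Psi> v) \<partial>\<pi>) + psi_exp \<alpha> cp cm q)
          \<le> EKs * Nr powr (-\<alpha>1/\<alpha>) * (\<bar>q\<bar> * (1+\<bar>q\<bar>))"
        using H(2) unfolding EKs_def by simp
      show ?thesis unfolding e2 using d12[unfolded e2] H2 Nr by (intro add_mono mult_left_mono) auto
    qed
    also have "Nr * (q^2 * A^2 * C1) + EKs * Nr powr (-\<alpha>1/\<alpha>) * (\<bar>q\<bar> * (1+\<bar>q\<bar>)) \<le> Nr powr (-\<alpha>1/\<alpha>) * (\<bar>q\<bar> * (1+\<bar>q\<bar>)) * C1 + EKs * Nr powr (-\<alpha>1/\<alpha>) * (\<bar>q\<bar> * (1+\<bar>q\<bar>))"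
    proof (rule add_right_mono)
      have "Nr * (q^2 * A^2 * C1) = (Nr * A^2) * q^2 * C1" by (simp add: algebra_simps)
      also have "\<dots> \<le> Nr powr (-\<alpha>1/\<alpha>) * q^2 * C1" using NA C1 by (intro mult_right_mono) auto
      also have "\<dots> \<le> Nr powr (-\<alpha>1/\<alpha>) * (\<bar>q\<bar> * (1+\<bar>q\<bar>)) * C1" using qq C1 by (intro mult_right_mono mult_left_mono) auto
      finally show "Nr * (q^2 * A^2 * C1) \<le> Nr powr (-\<alpha>1/\<alpha>) * (\<bar>q\<bar> * (1+\<bar>q\<bar>)) * C1" .
    qed
    also have "Nr powr (-\<alpha>1/\<alpha>) * (\<bar>q\<bar> * (1+\<bar>q\<bar>)) * C1 + EKs * Nr powr (-\<alpha>1/\<alpha>) * (\<bar>q\<bar> * (1+\<bar>q\<bar>))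
        \<le> C * Nr powr (-\<alpha>1/\<alpha>) * (\<bar>q\<bar> * (1+\<bar>q\<bar>))"
    proof -
      have "0 \<le> Nr powr (-\<alpha>1/\<alpha>) * (\<bar>q\<bar> * (1+\<bar>q\<bar>))" by simp
      then show ?thesis unfolding C_def by (simp add: algebra_simps)
    qed
    also have "\<dots> = C / real N powr (\<alpha>1 / \<alpha>) * \<bar>q\<bar> * (1 + \<bar>q\<bar>)"
      using Nr unfolding Nr_def by (simp add: powr_minus field_simps)
    finally show "cmod (- of_nat N *
                    (\<integral>\<omega>. hfun q (real N powr (-1/\<alpha>) * (chi (\<xi> 1 \<omega>) - trans_op \<pi> p chi (\<xi> 0 \<omega>))) \<partial>M)
                  - psi_exp \<alpha> cp cm q)
            \<le> C / real N powr (\<alpha>1 / \<alpha>) * \<bar>q\<bar> * (1 + \<bar>q\<bar>)"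
      unfolding f1_def A_def Nr_def .
  qed
qed


theorem lemma5p3:
  fixes \<pi> :: "'a::polish_space measure" and p :: "'a \<Rightarrow> 'a \<Rightarrow> real"
    and M :: "'b measure" and \<xi> :: "nat \<Rightarrow> 'b \<Rightarrow> 'a"
    and \<Psi> chi :: "'a \<Rightarrow> real"
    and \<alpha> \<alpha>\<^sub>1 cp cm C\<^sub>s :: real
  assumes pi_prob: "prob_space \<pi>" and pi_borel: "sets \<pi> = sets borel"
    and kernel: "density_kernel \<pi> p"
    and chain: "markov_chain M \<xi> \<pi> p"
    and invariant: "invariant_measure \<pi> p"
    and ergodic: "ergodic_measure \<pi> p"
    and gap: "spectral_gap \<pi> p"
    and Psi_meas: "\<Psi> \<in> borel_measurable \<pi>"
    and Psi_int: "integrable \<pi> \<Psi>"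
    and Psi_mean: "(\<integral>v. \<Psi> v \<partial>\<pi>) = 0"
    and alpha: "1 < \<alpha>" "\<alpha> < 2"
    and alpha1: "0 < \<alpha>\<^sub>1" "\<alpha>\<^sub>1 < 2 - \<alpha>"
    and cpm: "0 \<le> cp" "0 \<le> cm" "0 < cp + cm"
    and Cs: "0 < C\<^sub>s"
    and tails: "\<And>l. l \<ge> 1 \<Longrightarrow>
        \<bar>measure \<pi> {v \<in> space \<pi>. \<Psi> v > l} - cp * l powr (-\<alpha>)\<bar>
        + \<bar>measure \<pi> {v \<in> space \<pi>. \<Psi> v < - l} - cm * l powr (-\<alpha>)\<bar>
        \<le> C\<^sub>s * l powr (-\<alpha> - \<alpha>\<^sub>1)"
    and chi_meas: "chi \<in> borel_measurable \<pi>"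
    and chi_Lbeta: "\<And>\<beta>. 1 \<le> \<beta> \<Longrightarrow> \<beta> < \<alpha> \<Longrightarrow> integrable \<pi> (\<lambda>v. \<bar>chi v\<bar> powr \<beta>)"
    and chi_mean: "(\<integral>v. chi v \<partial>\<pi>) = 0"
    and chi_eq: "AE w in \<pi>. chi w - trans_op \<pi> p chi w = \<Psi> w"
  shows "(\<exists>C>0. \<forall>q::real. \<forall>N::nat. N \<ge> 1 \<longrightarrow>
            cmod (- of_nat N *
                    (\<integral>\<omega>. hfun q (real N powr (-1/\<alpha>) * (chi (\<xi> 1 \<omega>) - trans_op \<pi> p chi (\<xi> 0 \<omega>))) \<partial>M)
                  - psi_exp \<alpha> cp cm q)
            \<le> C / real N powr (\<alpha>\<^sub>1 / \<alpha>) * \<bar>q\<bar> * (1 + \<bar>q\<bar>))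
       \<and> (\<forall>\<Delta>::real set. \<forall>\<beta>. bounded \<Delta> \<longrightarrow> 1 \<le> \<beta> \<longrightarrow> \<beta> < \<alpha> \<longrightarrow>
            (\<exists>C>0. \<forall>q::real. \<forall>N::nat. N \<ge> 1 \<longrightarrow>
              ennreal (real N) * (\<integral>\<^sup>+ v. (SUP l\<in>\<Delta>.
                   ennreal (cmod (hfun q ((\<Psi> v + l) / real N powr (1/\<alpha>))) powr \<beta>)) \<partial>\<pi>)
              \<le> ennreal (C * \<bar>q\<bar> powr \<beta> * (1 + \<bar>q\<bar>))))"
proof -
  have chi_int: "integrable \<pi> chi"
  proof -
    have "integrable \<pi> (\<lambda>v. \<bar>chi v\<bar> powr 1)" using chi_Lbeta[of 1] alpha by simp
    then have "integrable \<pi> (\<lambda>v. \<bar>chi v\<bar>)" by simp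
    then show ?thesis using chi_meas by (simp add: integrable_abs_iff)
  qed
  have TB: "\<And>t. 0 < t \<Longrightarrow> measure \<pi> {v\<in>space \<pi>. t < \<bar>\<Psi> v\<bar>} \<le> (1 + cp + cm + C\<^sub>s) * t powr (-\<alpha>)"
    by (rule TAILB[OF pi_prob Psi_meas alpha(1) alpha1(1) cpm(1,2) Cs tails]) auto
  have K: "0 \<le> 1 + cp + cm + C\<^sub>s" using cpm Cs by simp
  show ?thesis
  proof (intro conjI allI impI)
    show "\<exists>C>0. \<forall>q::real. \<forall>N::nat. N \<ge> 1 \<longrightarrow>
            cmod (- of_nat N *
                    (\<integral>\<omega>. hfun q (real N powr (-1/\<alpha>) * (chi (\<xi> 1 \<omega>) - trans_op \<pi> p chi (\<xi> 0 \<omega>))) \<partial>M)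
                  - psi_exp \<alpha> cp cm q)
            \<le> C / real N powr (\<alpha>\<^sub>1 / \<alpha>) * \<bar>q\<bar> * (1 + \<bar>q\<bar>)"
      by (rule PART1[OF pi_prob kernel chain invariant Psi_meas Psi_int alpha alpha1 cpm(1,2) Cs tails chi_meas chi_int chi_eq])
    fix \<Delta> :: "real set" and \<beta> :: real
    assume "bounded \<Delta>" "1 \<le> \<beta>" "\<beta> < \<alpha>"
    then show "\<exists>C>0. \<forall>q::real. \<forall>N::nat. N \<ge> 1 \<longrightarrow>
              ennreal (real N) * (\<integral>\<^sup>+ v. (SUP l\<in>\<Delta>.
                   ennreal (cmod (hfun q ((\<Psi> v + l) / real N powr (1/\<alpha>))) powr \<beta>)) \<partial>\<pi>)
              \<le> ennreal (C * \<bar>q\<bar> powr \<beta> * (1 + \<bar>q\<bar>))"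
      by (intro PART2[OF pi_prob Psi_meas alpha K TB]) auto
  qed
qed

end
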